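(* The Minimmit protocol (described in the context) satisfies Consistency: in every execution, if $p_i$ and $p_j$ are correct, then for any timeslots $t$ and $t'$, $\text{log}_i(t)$ and $\text{log}_j(t')$ are compatible, i.e. one is a prefix of the other.
   Context: Setting. There are $n$ processors $\Pi=\{p_0,\dots,p_{n-1}\}$ and an integer $f$ with $5f+1\le n$. At most $f$ processors may be corrupted by an adversary during the execution and then behave arbitrarily (Byzantine); processors never corrupted are called correct. Processors communicate over point-to-point authenticated channels; every message is signed by its sender; a PKI validates signatures and $H$ is a collision-resistant hash function; attention is restricted to executions in which the adversary cannot forge signatures or find hash collisions. Time is divided into timeslots $t\in\mathbb{N}_{\ge 0}$ (partial synchrony): a message sent at time $t$ arrives at some time $t'>t$ with $t'\le \max\{\text{GST},t\}+\Delta$, where $\Delta$ is known to the protocol and GST is unknown and chosen by the adversary (who also chooses delivery times subject to this constraint). Clocks of correct processors advance in real time. When a correct processor sends a message to all processors, it regards that message as immediately received by itself. Transactions are unique messages signed by the environment; each timeslot each processor may receive a finite set of transactions. Each processor $p_i$ maintains an append-only log $\text{log}_i$ of distinct transactions, $\text{log}_i(t)$ denoting its value at the end of timeslot $t$. Blocks. $\text{lead}(v):=p_j$ with $j=v \bmod n$. The genesis block is $b_{\text{gen}}=(0,\lambda,\lambda)$ ($\lambda$ the empty sequence), considered finalised at the start. Any other block is a tuple $b=(v,\text{Tr},h)$ signed by $\text{lead}(v)$, with $v\in\mathbb{N}_{\ge1}$ ($b.\text{view}=v$, "a view $v$ block"), $\text{Tr}=b.\text{Tr}$ a sequence of distinct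 transactions, and $h=b.h$ a hash value; its parent is the block $b'$ with $H(b')=h$. The ancestors of $b$ are $b$ and the ancestors of its parent ($b_{\text{gen}}$ has only itself). Two blocks are inconsistent if neither is an ancestor of the other. To finalise $b$ means: upon obtaining all ancestors of $b$, the processor sets its log to extend the concatenation of $b'.\text{Tr}$ over ancestors $b'$ of $b$ (with duplicates removed). Messages. A vote for $b$ is $(\text{vote},b)$. An M-notarization for $b$ is a set of $2f+1$ votes for $b$ signed by distinct processors; an L-notarization for $b$ is a set of $n-f$ votes for $b$ signed by distinct processors. A nullify$(v)$ message is $(\text{nullify},v)$; a nullification for view $v$ is a set of $2f+1$ nullify$(v)$ messages signed by distinct processors. Local state of each processor: $\mathtt{S}$, the set of all received messages (automatically updated; it contains a block $b$ if it contains any message having $b$ as an entry; initially it contains only $b_{\text{gen}}$ and an M- and L-notarization for $b_{\text{gen}}$); the current view $\mathtt{v}$ (initially 1; a processor enters view $v$ when $\mathtt{v}$ becomes $v$); a timer $\mathtt{T}$ (initially 0, increasing in real time, reset to 0 upon entering a new view); $\mathtt{nullified}$ (initially false) and $\mathtt{notarized}$ (initially $\bot$, a value different from every block). SelectParent$(\mathtt{S},\mathtt{v})$: let $v'<\mathtt{v}$ be greatest such that $\mathtt{S}$ contains an M-notarization for some block of view $v'$; output the lexicographically least such block. ProposeChild$(b,v)$: form a sequence Tr of distinct transactions containing all transactions received and not in $b'.\text{Tr}$ for any ancestor $b'\in\mathtt{S}$ of $b$, and send the block $(v,\text{Tr},H(b))$ to all processors. $\mathtt{S}$ contains a valid proposal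 $b$ for view $v$ if $\mathtt{S}$ contains (i) precisely one block of the form $b=(v,\text{Tr},h)$ signed by $\text{lead}(v)$, (ii) an M-notarization for some $b'$ with $H(b')=h$, say $b'.\text{view}=v'$, and (iii) a nullification for each view in the open interval $(v',v)$. At timeslot $t$ a nullification $N\subseteq\mathtt{S}$ for a view $v$ is new if $\mathtt{S}$ contained no nullification for $v$ at any earlier timeslot and $N$ is lexicographically least among nullifications for $v$ in $\mathtt{S}$; new M-notarizations and new L-notarizations for a block $b$ are defined analogously. Protocol (Minimmit): at every timeslot, correct $p_i$ does, in order: (1) send new nullifications in $\mathtt{S}$ to all processors; (2) send new M- and L-notarizations in $\mathtt{S}$ to all; (3) if $p_i=\text{lead}(\mathtt{v})$, execute ProposeChild(SelectParent$(\mathtt{S},\mathtt{v}),\mathtt{v})$; (4) if $\mathtt{S}$ contains a valid proposal $b$ for view $\mathtt{v}$ and $\mathtt{notarized}=\bot$ and $\mathtt{nullified}=$ false, set $\mathtt{notarized}:=b$ and send $(\text{vote},b)$ to all; (5) if $\mathtt{T}=2\Delta$, $\mathtt{nullified}=$ false and $\mathtt{notarized}=\bot$, set $\mathtt{nullified}:=$ true and send $(\text{nullify},\mathtt{v})$ to all; (6) if $\mathtt{S}$ contains a nullification for $\mathtt{v}$, set $\mathtt{v}:=\mathtt{v}+1$, $\mathtt{nullified}:=$ false, $\mathtt{notarized}:=\bot$; (7) if $\mathtt{S}$ contains an M-notarization for some $b$ with $b.\text{view}=\mathtt{v}$: if $\mathtt{notarized}=\bot$ and $\mathtt{nullified}=$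 false send $(\text{vote},b)$ to all; then set $\mathtt{v}:=\mathtt{v}+1$, $\mathtt{nullified}:=$ false, $\mathtt{notarized}:=\bot$; (8) if $\mathtt{nullified}=$ false, $\mathtt{notarized}\neq\bot$, and $\mathtt{S}$ contains at least $2f+1$ messages signed by distinct processors, each either $(\text{nullify},\mathtt{v})$ or $(\text{vote},b)$ for some $b$ with $b.\text{view}=\mathtt{v}$ and $b\ne\mathtt{notarized}$, then set $\mathtt{nullified}:=$ true and send $(\text{nullify},\mathtt{v})$ to all; (9) if $\mathtt{S}$ contains a new L-notarization for a block $b$, finalise $b$. The logs of correct processors change only through finalisation. *)

theory Defs
  imports Main "HOL-Library.Product_Lexorder" "HOL-Library.List_Lexorder"
          "HOL-Library.Option_ord" "HOL-Library.Sublist"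
begin

text \<open>Hash values have type 'h; the genesis block
  has the empty sequence as hash field, modelled by None; every other block carries
  Some h.  Orders on 't and 'h give the lexicographic order on blocks
  (product / list / option lexicographic orders from HOL-Library).\<close>

type_synonym ('t,'h) block = "nat \<times> 't list \<times> 'h option"

definition bview :: "('t,'h) block \<Rightarrow> nat" where "bview b = fst b"
definition btr :: "('t,'h) block \<Rightarrow> 't list" where "btr b = fst (snd b)"
definition bh :: "('t,'h) block \<Rightarrow> 'h option" where "bh b = snd (snd b)"

definition gen :: "('t,'h) block" where "gen = (0, [], None)"

definition lead :: "nat \<Rightarrow> nat \<Rightarrow> nat" where "lead n v = v mod n"

text \<open>Primitive signed messages: (signer, content).  A notarization / nullification is a
  set of such votes / nullify messages; forwarding it means sending its members.\<close>

datatype ('t,'h) msg = Prop "('t,'h) block" | Vote "('t,'h) block" | Null nat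

type_synonym ('t,'h) atom = "nat \<times> ('t,'h) msg"

definition valid_block :: "('t,'h) block \<Rightarrow> bool" where
  "valid_block b \<longleftrightarrow> b = gen \<or> (1 \<le> bview b \<and> bh b \<noteq> None)"

text \<open>Signature validity (checked via the PKI): signer is a processor, a block
  message is signed by the leader of its view.\<close>
definition valid_atom :: "nat \<Rightarrow> ('t,'h) atom \<Rightarrow> bool" where
  "valid_atom n a \<longleftrightarrow> fst a < n \<and>
     (case snd a of
        Prop b \<Rightarrow> valid_block b \<and> b \<noteq> gen \<and> fst a = lead n (bview b)
      | Vote b \<Rightarrow> valid_block b
      | Null v \<Rightarrow> True)"

text \<open>All signatures carried by a message: its own, and the leader's signature on the
  block it mentions (if not genesis).\<close>
definition sigs :: "nat \<Rightarrow> ('t,'h) atom \<Rightarrow> ('t,'h) atom set" where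
  "sigs n a = {a} \<union>
     (case snd a of
        Prop b \<Rightarrow> (if b = gen then {} else {(lead n (bview b), Prop b)})
      | Vote b \<Rightarrow> (if b = gen then {} else {(lead n (bview b), Prop b)})
      | Null v \<Rightarrow> {})"

definition blocks :: "('t,'h) atom set \<Rightarrow> ('t,'h) block set" where
  "blocks S = {gen} \<union> {b. \<exists>j. (j, Prop b) \<in> S \<or> (j, Vote b) \<in> S}"

definition voters :: "('t,'h) atom set \<Rightarrow> ('t,'h) block \<Rightarrow> nat set" where
  "voters S b = {j. (j, Vote b) \<in> S}"

definition nullers :: "('t,'h) atom set \<Rightarrow> nat \<Rightarrow> nat set" where
  "nullers S v = {j. (j, Null v) \<in> S}"

definition hasM :: "nat \<Rightarrow> ('t,'h) atom set \<Rightarrow> ('t,'h) block \<Rightarrow> bool" where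
  "hasM f S b \<longleftrightarrow> (\<exists>Q \<subseteq> voters S b. card Q = 2*f+1)"

definition hasL :: "nat \<Rightarrow> nat \<Rightarrow> ('t,'h) atom set \<Rightarrow> ('t,'h) block \<Rightarrow> bool" where
  "hasL n f S b \<longleftrightarrow> (\<exists>Q \<subseteq> voters S b. card Q = n - f)"

definition hasNull :: "nat \<Rightarrow> ('t,'h) atom set \<Rightarrow> nat \<Rightarrow> bool" where
  "hasNull f S v \<longleftrightarrow> (\<exists>Q \<subseteq> nullers S v. card Q = 2*f+1)"

definition lexmin :: "nat \<Rightarrow> nat set \<Rightarrow> nat set" where
  "lexmin k A = (THE Q. Q \<subseteq> A \<and> card Q = k \<and>
     (\<forall>Q'. Q' \<subseteq> A \<and> card Q' = k \<longrightarrow> sorted_list_of_set Q \<le> sorted_list_of_set Q'))"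

text \<open>Messages sent in steps (1) and (2): new nullifications and new M-/L-notarizations.
  S0 is the set S at the end of the previous timeslot, S1 the current one.\<close>
definition new_msgs :: "nat \<Rightarrow> nat \<Rightarrow> ('t,'h) atom set \<Rightarrow> ('t,'h) atom set \<Rightarrow> ('t,'h) atom set" where
  "new_msgs n f S0 S1 =
     {(j, Null v) | j v. hasNull f S1 v \<and> \<not> hasNull f S0 v \<and> j \<in> lexmin (2*f+1) (nullers S1 v)}
   \<union> {(j, Vote b) | j b. hasM f S1 b \<and> \<not> hasM f S0 b \<and> j \<in> lexmin (2*f+1) (voters S1 b)}
   \<union> {(j, Vote b) | j b. hasL n f S1 b \<and> \<not> hasL n f S0 b \<and> j \<in> lexmin (n-f) (voters S1 b)}"

inductive_set anc :: "(('t,'h) block \<Rightarrow> 'h) \<Rightarrow> ('t,'h) block \<Rightarrow> ('t,'h) block set"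
  for H :: "('t,'h) block \<Rightarrow> 'h" and b :: "('t,'h) block" where
  self: "b \<in> anc H b"
| parent: "c \<in> anc H b \<Longrightarrow> c \<noteq> gen \<Longrightarrow> bh c = Some (H p) \<Longrightarrow> p \<in> anc H b"

definition select_parent :: "nat \<Rightarrow> ('t::linorder,'h::linorder) atom set \<Rightarrow> nat \<Rightarrow> ('t,'h) block" where
  "select_parent f S v =
     (let v' = (GREATEST v'. v' < v \<and> (\<exists>b \<in> blocks S. bview b = v' \<and> hasM f S b))
      in LEAST b. b \<in> blocks S \<and> bview b = v' \<and> hasM f S b)"

definition valid_proposal :: "nat \<Rightarrow> (('t,'h) block \<Rightarrow> 'h) \<Rightarrow> ('t,'h) atom set \<Rightarrow> nat \<Rightarrow> ('t,'h) block \<Rightarrow> bool" where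
  "valid_proposal f H S v b \<longleftrightarrow>
     b \<in> blocks S \<and> bview b = v \<and> (\<forall>b' \<in> blocks S. bview b' = v \<longrightarrow> b' = b) \<and>
     (\<exists>b'. bh b = Some (H b') \<and> hasM f S b' \<and> (\<forall>w. bview b' < w \<and> w < v \<longrightarrow> hasNull f S w))"

definition fchain :: "(('t,'h) block \<Rightarrow> 'h) \<Rightarrow> ('t,'h) atom set \<Rightarrow> ('t,'h) block \<Rightarrow> ('t,'h) block list \<Rightarrow> bool" where
  "fchain H S b bs \<longleftrightarrow> bs \<noteq> [] \<and> hd bs = gen \<and> last bs = b \<and> set bs \<subseteq> blocks S \<and>
     (\<forall>k. Suc k < length bs \<longrightarrow> bh (bs ! Suc k) = Some (H (bs ! k)))"

text \<open>Concatenation with duplicates removed (first occurrences kept).\<close>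
definition dedup :: "'a list \<Rightarrow> 'a list" where "dedup xs = rev (remdups (rev xs))"

definition chain_log :: "(('t,'h) block \<Rightarrow> 'h) \<Rightarrow> ('t,'h) atom set \<Rightarrow> ('t,'h) block \<Rightarrow> 't list" where
  "chain_log H S b = dedup (concat (map btr (SOME bs. fchain H S b bs)))"

definition fin_update :: "'t list \<Rightarrow> 't list \<Rightarrow> 't list" where
  "fin_update C L = (if prefix C L then L else C)"

record ('t,'h) lst =
  lS :: "('t,'h) atom set"
  lv :: nat
  lentry :: nat
  lnull :: bool
  lnot :: "('t,'h) block option"
  llog :: "'t list"
  lpend :: "('t,'h) block set"
  lR :: "'t set"

definition init_state :: "nat \<Rightarrow> nat \<Rightarrow> ('t,'h) lst" where
  "init_state n f = \<lparr> lS = {(j, Vote gen) | j. j < n - f}, lv = 1, lentry = 0, lnull = False,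
      lnot = None, llog = [], lpend = {}, lR = {} \<rparr>"

text \<open>slot n f Delta H i t D X st st' Out: correct processor i at timeslot t, having received
  messages D and transactions X at t, moves from state st (end of t-1) to st' (end of t),
  sending the set Out of messages to all processors.\<close>
definition slot ::
  "nat \<Rightarrow> nat \<Rightarrow> nat \<Rightarrow> (('t::linorder,'h::linorder) block \<Rightarrow> 'h) \<Rightarrow> nat \<Rightarrow> nat \<Rightarrow>
   ('t,'h) atom set \<Rightarrow> 't set \<Rightarrow> ('t,'h) lst \<Rightarrow> ('t,'h) lst \<Rightarrow> ('t,'h) atom set \<Rightarrow> bool" where
  "slot n f \<Delta> H i t D X st st' Out \<longleftrightarrow>
   (let S0 = lS st;
        S1 = S0 \<union> {a \<in> D. valid_atom n a};
        R = lR st \<union> X;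
        v1 = lv st;
        O12 = new_msgs n f S0 S1;
        par = select_parent f S1 v1;
        need = R - \<Union> {set (btr b') | b'. b' \<in> anc H par \<inter> blocks S1}
    in \<exists>Tr b7 fo.
      (lead n v1 = i \<longrightarrow> distinct Tr \<and> set Tr = need) \<and>
      (let B3 = (v1, Tr, Some (H par));
           O3 = (if lead n v1 = i then {(i, Prop B3)} else {});
           S2 = S1 \<union> O3;
           c4 = ((\<exists>b. valid_proposal f H S2 v1 b) \<and> lnot st = None \<and> \<not> lnull st);
           B4 = (THE b. valid_proposal f H S2 v1 b);
           O4 = (if c4 then {(i, Vote B4)} else {});
           not4 = (if c4 then Some B4 else lnot st);
           S3 = S2 \<union> O4;
           c5 = (t = lentry st + 2 * \<Delta> \<and> \<not> lnull st \<and> not4 = None);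
           O5 = (if c5 then {(i, Null v1)} else {});
           null5 = (lnull st \<or> c5);
           S4 = S3 \<union> O5;
           c6 = hasNull f S4 v1;
           v6 = (if c6 then v1 + 1 else v1);
           null6 = (if c6 then False else null5);
           not6 = (if c6 then None else not4);
           ent6 = (if c6 then t else lentry st);
           c7 = (\<exists>b \<in> blocks S4. bview b = v6 \<and> hasM f S4 b)
       in (c7 \<longrightarrow> b7 \<in> blocks S4 \<and> bview b7 = v6 \<and> hasM f S4 b7) \<and>
         (let vote7 = (c7 \<and> not6 = None \<and> \<not> null6);
              O7 = (if vote7 then {(i, Vote b7)} else {});
              S5 = S4 \<union> O7;
              v7 = (if c7 then v6 + 1 else v6);
              null7 = (if c7 then False else null6);
              not7 = (if c7 then None else not6);
              ent7 = (if c7 then t else ent6);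
              c8 = (\<not> null7 \<and> not7 \<noteq> None \<and>
                    2*f+1 \<le> card {j. (j, Null v7) \<in> S5 \<or>
                               (\<exists>b. (j, Vote b) \<in> S5 \<and> bview b = v7 \<and> Some b \<noteq> not7)});
              O8 = (if c8 then {(i, Null v7)} else {});
              null8 = (null7 \<or> c8);
              S6 = S5 \<union> O8;
              pend9 = lpend st \<union> {b. hasL n f S6 b \<and> \<not> hasL n f S0 b};
              ready = {b \<in> pend9. \<exists>bs. fchain H S6 b bs}
          in distinct fo \<and> set fo = ready \<and>
             Out = O12 \<union> O3 \<union> O4 \<union> O5 \<union> O7 \<union> O8 \<and>
             st' = \<lparr> lS = S6, lv = v7, lentry = ent7, lnull = null8, lnot = not7,
                     llog = fold (\<lambda>b L. fin_update (chain_log H S6 b) L) fo (llog st),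
                     lpend = pend9 - ready, lR = R \<rparr>)))"

text \<open>Parameters: n, f, Delta, GST, hash function H, the set Byz of processors corrupted
  at some point, D i t = messages delivered to i at t, X i t = transactions received by i
  at t, Out i t = messages sent to all by i at t, st i t = state of i before timeslot t
  (st i (Suc t) = state at the end of timeslot t).\<close>
definition minimmit_exec ::
  "nat \<Rightarrow> nat \<Rightarrow> nat \<Rightarrow> nat \<Rightarrow> (('t::linorder,'h::linorder) block \<Rightarrow> 'h) \<Rightarrow> nat set \<Rightarrow>
   (nat \<Rightarrow> nat \<Rightarrow> ('t,'h) atom set) \<Rightarrow> (nat \<Rightarrow> nat \<Rightarrow> 't set) \<Rightarrow>
   (nat \<Rightarrow> nat \<Rightarrow> ('t,'h) atom set) \<Rightarrow> (nat \<Rightarrow> nat \<Rightarrow> ('t,'h) lst) \<Rightarrow> bool" where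
  "minimmit_exec n f \<Delta> GST H Byz D X Out st \<longleftrightarrow>
     5*f+1 \<le> n \<and> Byz \<subseteq> {..<n} \<and> card Byz \<le> f \<and> inj H \<and>
     (\<forall>i t. finite (X i t)) \<and>
     (\<forall>i. i < n \<and> i \<notin> Byz \<longrightarrow>
        st i 0 = init_state n f \<and>
        (\<forall>t. slot n f \<Delta> H i t (D i t) (X i t) (st i t) (st i (Suc t)) (Out i t))) \<and>
     (\<forall>i j t a. i < n \<and> i \<notin> Byz \<and> j < n \<and> j \<notin> Byz \<and> j \<noteq> i \<and> a \<in> Out i t \<longrightarrow>
        (\<exists>t'. t < t' \<and> t' \<le> max GST t + \<Delta> \<and> a \<in> D j t')) \<and>
     (\<forall>j t a. j < n \<and> j \<notin> Byz \<and> a \<in> D j t \<and> valid_atom n a \<longrightarrow>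
        (\<forall>s m. (s, m) \<in> sigs n a \<and> s < n \<and> s \<notin> Byz \<longrightarrow>
           m = Vote gen \<or> (\<exists>t0 < t. (s, m) \<in> Out s t0)))"

end

theory Submission
  imports Defs
begin


lemma Let_ex: "Let t P = (\<exists>x. x = t \<and> P x)"
  by simp

lemma slot_flat:
  assumes "slot n f \<Delta> H i t D X st st' Out"
  obtains S0 S1 R v1 O12 par need Tr b7 fo B3 O3 S2 c4 B4 O4 not4 S3 c5 O5 null5 S4 c6 v6 null6 not6
     ent6 c7 vote7 O7 S5 v7 null7 not7 ent7 c8 O8 null8 S6 pend9 ready
  where "S0 = lS st" "S1 = S0 \<union> {a \<in> D. valid_atom n a}" 
    "R = lR st \<union> X" "v1 = lv st" "O12 = new_msgs n f S0 S1"
    "par = select_parent f S1 v1"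
    "need = R - \<Union> {set (btr b') | b'. b' \<in> anc H par \<inter> blocks S1}"
    "lead n v1 = i \<longrightarrow> distinct Tr \<and> set Tr = need"
    "B3 = (v1, Tr, Some (H par))"
    "O3 = (if lead n v1 = i then {(i, Prop B3)} else {})"
    "S2 = S1 \<union> O3"
    "c4 = ((\<exists>b. valid_proposal f H S2 v1 b) \<and> lnot st = None \<and> \<not> lnull st)"
    "B4 = (THE b. valid_proposal f H S2 v1 b)"
    "O4 = (if c4 then {(i, Vote B4)} else {})"
    "not4 = (if c4 then Some B4 else lnot st)"
    "S3 = S2 \<union> O4"
    "c5 = (t = lentry st + 2 * \<Delta> \<and> \<not> lnull st \<and> not4 = None)"
    "O5 = (if c5 then {(i, Null v1)} else {})"
    "null5 = (lnull st \<or> c5)"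
    "S4 = S3 \<union> O5"
    "c6 = hasNull f S4 v1"
    "v6 = (if c6 then v1 + 1 else v1)"
    "null6 = (if c6 then False else null5)"
    "not6 = (if c6 then None else not4)"
    "ent6 = (if c6 then t else lentry st)"
    "c7 = (\<exists>b \<in> blocks S4. bview b = v6 \<and> hasM f S4 b)"
    "c7 \<longrightarrow> b7 \<in> blocks S4 \<and> bview b7 = v6 \<and> hasM f S4 b7"
    "vote7 = (c7 \<and> not6 = None \<and> \<not> null6)"
    "O7 = (if vote7 then {(i, Vote b7)} else {})"
    "S5 = S4 \<union> O7"
    "v7 = (if c7 then v6 + 1 else v6)"
    "null7 = (if c7 then False else null6)"
    "not7 = (if c7 then None else not6)"
    "ent7 = (if c7 then t else ent6)"
    "c8 = (\<not> null7 \<and> not7 \<noteq> None \<and>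
                    2*f+1 \<le> card {j. (j, Null v7) \<in> S5 \<or>
                               (\<exists>b. (j, Vote b) \<in> S5 \<and> bview b = v7 \<and> Some b \<noteq> not7)})"
    "O8 = (if c8 then {(i, Null v7)} else {})"
    "null8 = (null7 \<or> c8)"
    "S6 = S5 \<union> O8"
    "pend9 = lpend st \<union> {b. hasL n f S6 b \<and> \<not> hasL n f S0 b}"
    "ready = {b \<in> pend9. \<exists>bs. fchain H S6 b bs}"
    "distinct fo" "set fo = ready"
    "Out = O12 \<union> O3 \<union> O4 \<union> O5 \<union> O7 \<union> O8"
    "st' = \<lparr> lS = S6, lv = v7, lentry = ent7, lnull = null8, lnot = not7,
                     llog = fold (\<lambda>b L. fin_update (chain_log H S6 b) L) fo (llog st),
                     lpend = pend9 - ready, lR = R \<rparr>"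
  using assms unfolding slot_def Let_ex
  apply (elim exE conjE)
  apply (rule that)
  apply assumption+
  done

locale slotctx =
  fixes n f \<Delta> H i t D X and st :: "('t::linorder,'h::linorder,'z) lst_scheme" and st' Out S0 S1 R v1 O12 par need Tr b7 fo B3 O3 S2 c4 B4 O4 not4 S3 c5 O5 null5 S4 c6 v6 null6 not6 ent6 c7 vote7 O7 S5 v7 null7 not7 ent7 c8 O8 null8 S6 pend9 ready
  assumes eS0: "S0 = lS st"
    and eS1: "S1 = S0 \<union> {a \<in> D. valid_atom n a}"
    and eR: "R = lR st \<union> X"
    and ev1: "v1 = lv st"
    and eO12: "O12 = new_msgs n f S0 S1"
    and epar: "par = select_parent f S1 v1"
    and eneed: "need = R - \<Union> {set (btr b') | b'. b' \<in> anc H par \<inter> blocks S1}"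
    and eTr: "lead n v1 = i \<longrightarrow> distinct Tr \<and> set Tr = need"
    and eB3: "B3 = (v1, Tr, Some (H par))"
    and eO3: "O3 = (if lead n v1 = i then {(i, Prop B3)} else {})"
    and eS2: "S2 = S1 \<union> O3"
    and ec4: "c4 = ((\<exists>b. valid_proposal f H S2 v1 b) \<and> lnot st = None \<and> \<not> lnull st)"
    and eB4: "B4 = (THE b. valid_proposal f H S2 v1 b)"
    and eO4: "O4 = (if c4 then {(i, Vote B4)} else {})"
    and enot4: "not4 = (if c4 then Some B4 else lnot st)"
    and eS3: "S3 = S2 \<union> O4"
    and ec5: "c5 = (t = lentry st + 2 * \<Delta> \<and> \<not> lnull st \<and> not4 = None)"
    and eO5: "O5 = (if c5 then {(i, Null v1)} else {})"
    and enull5: "null5 = (lnull st \<or> c5)"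
    and eS4: "S4 = S3 \<union> O5"
    and ec6: "c6 = hasNull f S4 v1"
    and ev6: "v6 = (if c6 then v1 + 1 else v1)"
    and enull6: "null6 = (if c6 then False else null5)"
    and enot6: "not6 = (if c6 then None else not4)"
    and eent6: "ent6 = (if c6 then t else lentry st)"
    and ec7: "c7 = (\<exists>b \<in> blocks S4. bview b = v6 \<and> hasM f S4 b)"
    and eb7: "c7 \<longrightarrow> b7 \<in> blocks S4 \<and> bview b7 = v6 \<and> hasM f S4 b7"
    and evote7: "vote7 = (c7 \<and> not6 = None \<and> \<not> null6)"
    and eO7: "O7 = (if vote7 then {(i, Vote b7)} else {})"
    and eS5: "S5 = S4 \<union> O7"
    and ev7: "v7 = (if c7 then v6 + 1 else v6)"
    and enull7: "null7 = (if c7 then False else null6)"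
    and enot7: "not7 = (if c7 then None else not6)"
    and eent7: "ent7 = (if c7 then t else ent6)"
    and ec8: "c8 = (\<not> null7 \<and> not7 \<noteq> None \<and>
                    2*f+1 \<le> card {j. (j, Null v7) \<in> S5 \<or>
                               (\<exists>b. (j, Vote b) \<in> S5 \<and> bview b = v7 \<and> Some b \<noteq> not7)})"
    and eO8: "O8 = (if c8 then {(i, Null v7)} else {})"
    and enull8: "null8 = (null7 \<or> c8)"
    and eS6: "S6 = S5 \<union> O8"
    and epend9: "pend9 = lpend st \<union> {b. hasL n f S6 b \<and> \<not> hasL n f S0 b}"
    and eready: "ready = {b \<in> pend9. \<exists>bs. fchain H S6 b bs}"
    and efo1: "distinct fo"
    and efo2: "set fo = ready"
    and eOut: "Out = O12 \<union> O3 \<union> O4 \<union> O5 \<union> O7 \<union> O8"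
    and est: "st' = \<lparr> lS = S6, lv = v7, lentry = ent7, lnull = null8, lnot = not7,
                     llog = fold (\<lambda>b L. fin_update (chain_log H S6 b) L) fo (llog st),
                     lpend = pend9 - ready, lR = R \<rparr>"

lemma slot_ctx:
  assumes "slot n f \<Delta> H i t D X st st' Out"
  obtains S0 S1 R v1 O12 par need Tr b7 fo B3 O3 S2 c4 B4 O4 not4 S3 c5 O5 null5 S4 c6 v6 null6 not6 ent6 c7 vote7 O7 S5 v7 null7 not7 ent7 c8 O8 null8 S6 pend9 ready
  where "slotctx n f \<Delta> H i t D X st st' Out S0 S1 R v1 O12 par need Tr b7 fo B3 O3 S2 c4 B4 O4 not4 S3 c5 O5 null5 S4 c6 v6 null6 not6 ent6 c7 vote7 O7 S5 v7 null7 not7 ent7 c8 O8 null8 S6 pend9 ready"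
  using assms
  apply (elim slot_flat)
  apply (rule that)
  apply (unfold slotctx_def)
  apply (intro conjI)
  apply assumption+
  done




definition Inv :: "nat \<Rightarrow> ('t,'h,'z) lst_scheme \<Rightarrow> bool" where
 "Inv i st \<longleftrightarrow> 1 \<le> lv st \<and> lnot st \<noteq> Some gen \<and>
   (\<forall>b. (i,Vote b) \<in> lS st \<and> b \<noteq> gen \<longrightarrow> bview b \<le> lv st) \<and>
   (\<forall>w. (i,Null w) \<in> lS st \<longrightarrow> w \<le> lv st) \<and>
   (\<forall>b. b \<noteq> gen \<longrightarrow> ((i,Vote b) \<in> lS st \<and> bview b = lv st \<longleftrightarrow> lnot st = Some b)) \<and>
   ((i, Null (lv st)) \<in> lS st \<longleftrightarrow> lnull st) \<and>
   (\<forall>b b'. (i,Vote b) \<in> lS st \<longrightarrow> (i,Vote b') \<in> lS st \<longrightarrow> b \<noteq> gen \<longrightarrow> b' \<noteq> gen \<longrightarrow>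
       bview b = bview b' \<longrightarrow> b = b')"

definition SelfD :: "nat \<Rightarrow> nat \<Rightarrow> ('t,'h) atom set \<Rightarrow> ('t,'h,'z) lst_scheme \<Rightarrow> bool" where
 "SelfD n i D st \<longleftrightarrow> (\<forall>m. (i,m) \<in> D \<and> valid_atom n (i,m) \<longrightarrow> m = Vote gen \<or> (i,m) \<in> lS st)"

lemma bview_gen[simp]: "bview gen = 0" by (simp add: gen_def bview_def)
lemma bh_gen[simp]: "bh gen = None" by (simp add: gen_def bh_def)

lemma vp_unique: "valid_proposal f H S v b1 \<Longrightarrow> valid_proposal f H S v b2 \<Longrightarrow> b1 = b2"
  unfolding valid_proposal_def by metis

lemma vp_The: "\<exists>b. valid_proposal f H S v b \<Longrightarrow> valid_proposal f H S v (THE b. valid_proposal f H S v b)"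
  by (metis (mono_tags) theI vp_unique)

lemma voters_mono: "S \<subseteq> S' \<Longrightarrow> voters S b \<subseteq> voters S' b" by (auto simp: voters_def)
lemma nullers_mono: "S \<subseteq> S' \<Longrightarrow> nullers S v \<subseteq> nullers S' v" by (auto simp: nullers_def)
lemma hasM_mono: "S \<subseteq> S' \<Longrightarrow> hasM f S b \<Longrightarrow> hasM f S' b"
  unfolding hasM_def by (meson order_trans voters_mono)
lemma hasL_mono: "S \<subseteq> S' \<Longrightarrow> hasL n f S b \<Longrightarrow> hasL n f S' b"
  unfolding hasL_def by (meson order_trans voters_mono)
lemma hasNull_mono: "S \<subseteq> S' \<Longrightarrow> hasNull f S b \<Longrightarrow> hasNull f S' b"
  unfolding hasNull_def by (meson order_trans nullers_mono)

lemma blocks_valid: "\<forall>a \<in> S. valid_atom n a \<Longrightarrow> b \<in> blocks S \<Longrightarrow> valid_block b"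
  unfolding blocks_def valid_atom_def valid_block_def by auto

lemma valid_block_view: "valid_block b \<Longrightarrow> b \<noteq> gen \<Longrightarrow> 1 \<le> bview b"
  unfolding valid_block_def by auto

lemma voters_fin: "\<forall>a \<in> S. valid_atom n a \<Longrightarrow> voters S b \<subseteq> {..<n}"
  unfolding voters_def valid_atom_def by auto
lemma nullers_fin: "\<forall>a \<in> S. valid_atom n a \<Longrightarrow> nullers S v \<subseteq> {..<n}"
  unfolding nullers_def valid_atom_def by auto

lemma lexmin_sub:
  assumes fin: "finite A" and ex: "\<exists>Q \<subseteq> A. card Q = k"
  shows "lexmin k A \<subseteq> A"
proof -
  let ?F = "{Q. Q \<subseteq> A \<and> card Q = k}"
  have fF: "finite ?F" by (rule finite_subset[of _ "Pow A"]) (auto simp: fin)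
  have neF: "?F \<noteq> {}" using ex by auto
  let ?L = "sorted_list_of_set ` ?F"
  have fL: "finite ?L" "?L \<noteq> {}" using fF neF by auto
  have "Min ?L \<in> ?L" using Min_in[OF fL] .
  then obtain Q0 where Q0: "Q0 \<subseteq> A" "card Q0 = k" "sorted_list_of_set Q0 = Min ?L" by auto
  have all0: "\<forall>Q'. Q' \<subseteq> A \<and> card Q' = k \<longrightarrow> sorted_list_of_set Q0 \<le> sorted_list_of_set Q'"
  proof (intro allI impI)
    fix Q' assume "Q' \<subseteq> A \<and> card Q' = k"
    hence "sorted_list_of_set Q' \<in> ?L" by blast
    hence "Min ?L \<le> sorted_list_of_set Q'" using Min_le[OF fL(1)] by blast
    thus "sorted_list_of_set Q0 \<le> sorted_list_of_set Q'" using Q0(3) by simp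
  qed
  have P0: "Q0 \<subseteq> A \<and> card Q0 = k \<and>
     (\<forall>Q'. Q' \<subseteq> A \<and> card Q' = k \<longrightarrow> sorted_list_of_set Q0 \<le> sorted_list_of_set Q')"
    using Q0(1,2) all0 by blast
  have uniq: "Q1 = Q0" if "Q1 \<subseteq> A \<and> card Q1 = k \<and>
     (\<forall>Q'. Q' \<subseteq> A \<and> card Q' = k \<longrightarrow> sorted_list_of_set Q1 \<le> sorted_list_of_set Q')" for Q1
  proof -
    have l1: "sorted_list_of_set Q1 \<le> sorted_list_of_set Q0"
      using that[THEN conjunct2, THEN conjunct2, rule_format, of Q0] Q0 by simp
    have l2: "sorted_list_of_set Q0 \<le> sorted_list_of_set Q1"
      using all0[rule_format, of Q1] that by simp
    have eq: "sorted_list_of_set Q1 = sorted_list_of_set Q0" using l1 l2 by (rule order_antisym)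
    have f1: "finite Q1" using that finite_subset[OF _ fin] by blast
    have f0: "finite Q0" using Q0(1) finite_subset[OF _ fin] by blast
    have "set (sorted_list_of_set Q1) = Q1" using f1 by simp
    moreover have "set (sorted_list_of_set Q0) = Q0" using f0 by simp
    ultimately show ?thesis using eq by metis
  qed
  have "lexmin k A = Q0" unfolding lexmin_def
    apply (rule the_equality)
     apply (rule P0)
    apply (erule uniq)
    done
  thus ?thesis using Q0 by simp
qed

context slotctx begin

lemma st'_simps: "lS st' = S6" "lv st' = v7" "lnull st' = null8" "lnot st' = not7"
   "lpend st' = pend9 - ready" "llog st' = fold (\<lambda>b L. fin_update (chain_log H S6 b) L) fo (llog st)"
  by (simp_all add: est)

lemma S6_eq: "S6 = S1 \<union> O3 \<union> O4 \<union> O5 \<union> O7 \<union> O8"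
  by (simp add: eS6 eS5 eS4 eS3 eS2)

lemma S1_eq: "S1 = lS st \<union> {a\<in>D. valid_atom n a}" by (simp add: eS1 eS0)

lemma mono: "lS st \<subseteq> lS st'" "S1 \<subseteq> lS st'"
  using S6_eq S1_eq st'_simps by auto

lemma lv_mono: "lv st \<le> lv st'"
  using st'_simps ev7 ev6 ev1 by auto

lemma others: "(j,m) \<in> lS st' \<Longrightarrow> j \<noteq> i \<Longrightarrow> (j,m) \<in> S1"
  using S6_eq st'_simps eO3 eO4 eO5 eO7 eO8 by (auto split: if_splits)

lemma selfs: "(i,m) \<in> lS st' \<Longrightarrow> (i,m) \<in> S1 \<or> (m = Prop B3 \<and> lead n v1 = i) \<or> (m = Vote B4 \<and> c4)
   \<or> (m = Null v1 \<and> c5) \<or> (m = Vote b7 \<and> vote7) \<or> (m = Null v7 \<and> c8)"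
  using S6_eq st'_simps eO3 eO4 eO5 eO7 eO8 by (auto split: if_splits)

lemma ins: "lead n v1 = i \<Longrightarrow> (i, Prop B3) \<in> lS st'" "c4 \<Longrightarrow> (i, Vote B4) \<in> lS st'"
  "c5 \<Longrightarrow> (i, Null v1) \<in> lS st'" "vote7 \<Longrightarrow> (i, Vote b7) \<in> lS st'" "c8 \<Longrightarrow> (i, Null v7) \<in> lS st'"
  using S6_eq st'_simps eO3 eO4 eO5 eO7 eO8 by auto

lemma c4_facts: "c4 \<Longrightarrow> valid_proposal f H S2 v1 B4 \<and> bview B4 = v1 \<and> B4 \<noteq> gen \<and> bh B4 \<noteq> None \<and> lnot st = None \<and> \<not> lnull st"
proof -
  assume c: c4
  have vp: "valid_proposal f H S2 v1 B4" using c ec4 eB4 vp_The[of f H S2 v1] by simp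
  hence "bview B4 = v1" "bh B4 \<noteq> None" unfolding valid_proposal_def by auto
  hence "B4 \<noteq> gen" by auto
  with vp \<open>bview B4 = v1\<close> \<open>bh B4 \<noteq> None\<close> show ?thesis using c ec4 by simp
qed

lemma c7_facts: "c7 \<Longrightarrow> bview b7 = v6" using eb7 by blast


lemma votes_new:
  assumes sd: "SelfD n i D st" and bg: "b \<noteq> gen"
  shows "(i,Vote b) \<in> lS st' \<longleftrightarrow> (i,Vote b) \<in> lS st \<or> (b = B4 \<and> c4) \<or> (b = b7 \<and> vote7)"
proof
  assume "(i,Vote b) \<in> lS st'"
  from selfs[OF this] show "(i,Vote b) \<in> lS st \<or> (b = B4 \<and> c4) \<or> (b = b7 \<and> vote7)"
    using sd bg S1_eq unfolding SelfD_def by auto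
next
  assume "(i,Vote b) \<in> lS st \<or> (b = B4 \<and> c4) \<or> (b = b7 \<and> vote7)"
  thus "(i,Vote b) \<in> lS st'" using mono ins by auto
qed

lemma nulls_new:
  assumes sd: "SelfD n i D st"
  shows "(i,Null w) \<in> lS st' \<longleftrightarrow> (i,Null w) \<in> lS st \<or> (w = v1 \<and> c5) \<or> (w = v7 \<and> c8)"
proof
  assume "(i,Null w) \<in> lS st'"
  from selfs[OF this] show "(i,Null w) \<in> lS st \<or> (w = v1 \<and> c5) \<or> (w = v7 \<and> c8)"
    using sd S1_eq unfolding SelfD_def by auto
next
  assume "(i,Null w) \<in> lS st \<or> (w = v1 \<and> c5) \<or> (w = v7 \<and> c8)"
  thus "(i,Null w) \<in> lS st'" using mono ins by auto
qed

lemma inv_step: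
  assumes inv: "Inv i st" and sd: "SelfD n i D st"
  shows "Inv i st'"
proof -
  note I = inv[unfolded Inv_def]
  have c5f: "c5 \<Longrightarrow> \<not> lnull st \<and> \<not> c4 \<and> lnot st = None" using ec5 enot4 by (auto split: if_splits)
  have c8f: "c8 \<Longrightarrow> \<not> c5 \<and> \<not> c6 \<and> \<not> c7 \<and> \<not> lnull st" using ec8 enull7 enot7 enot6 enull6 enull5 ec5
    by (auto split: if_splits)
  have v7f: "v7 = (if c6 then (if c7 then v1 + 2 else v1 + 1) else (if c7 then v1 + 1 else v1))"
    using ev7 ev6 by auto
  have b7f: "vote7 \<Longrightarrow> bview b7 = (if c6 then v1 + 1 else v1) \<and> b7 \<noteq> gen \<and> c7 \<and>
      (\<not> c6 \<longrightarrow> \<not> c4 \<and> lnot st = None \<and> \<not> lnull st \<and> \<not> c5)"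
    using c7_facts evote7 ev6 enot6 enot4 enull6 enull5 I ev1 by (auto split: if_splits)
  have nn: "not7 = (if c6 \<or> c7 then None else (if c4 then Some B4 else lnot st))"
    using enot7 enot6 enot4 by auto
  have nl: "null8 = (if c6 \<or> c7 then False else (lnull st \<or> c5 \<or> c8))"
    using enull8 enull7 enull6 enull5 c8f by auto
  have V: "\<And>b. b \<noteq> gen \<Longrightarrow> (i,Vote b) \<in> lS st' \<longleftrightarrow> (i,Vote b) \<in> lS st \<or> (b = B4 \<and> c4) \<or> (b = b7 \<and> vote7)"
    using votes_new[OF sd] by blast
  have N: "\<And>w. (i,Null w) \<in> lS st' \<longleftrightarrow> (i,Null w) \<in> lS st \<or> (w = v1 \<and> c5) \<or> (w = v7 \<and> c8)"
    using nulls_new[OF sd] by blast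
  have c8v: "c8 \<Longrightarrow> v7 = v1" using c8f v7f by auto
  have B4f: "c4 \<Longrightarrow> bview B4 = v1 \<and> B4 \<noteq> gen \<and> lnot st = None \<and> \<not> lnull st" using c4_facts by blast
  have lv': "lv st' = v7" "lnot st' = not7" "lnull st' = null8" using st'_simps by auto
  have ev1': "v1 = lv st" using ev1 .
  have I1: "1 \<le> lv st" and I2: "lnot st \<noteq> Some gen"
    and I3: "\<And>b. (i,Vote b) \<in> lS st \<Longrightarrow> b \<noteq> gen \<Longrightarrow> bview b \<le> lv st"
    and I4: "\<And>w. (i,Null w) \<in> lS st \<Longrightarrow> w \<le> lv st"
    and I5: "\<And>b. b \<noteq> gen \<Longrightarrow> ((i,Vote b) \<in> lS st \<and> bview b = lv st \<longleftrightarrow> lnot st = Some b)"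
    and I6: "(i, Null (lv st)) \<in> lS st \<longleftrightarrow> lnull st"
    and I7: "\<And>b b'. (i,Vote b) \<in> lS st \<Longrightarrow> (i,Vote b') \<in> lS st \<Longrightarrow> b \<noteq> gen \<Longrightarrow> b' \<noteq> gen \<Longrightarrow>
       bview b = bview b' \<Longrightarrow> b = b'"
    using I by blast+
  have v67: "v1 \<le> v6" "v6 \<le> v7" using ev6 ev7 by auto
  show ?thesis
    unfolding Inv_def lv'
  proof (intro conjI allI impI)
    show "1 \<le> v7" using v67 I1 ev1' by auto
    show "not7 \<noteq> Some gen" using nn B4f I2 by auto
  next
    fix b assume A: "(i, Vote b) \<in> lS st' \<and> b \<noteq> gen"
    hence "(i,Vote b) \<in> lS st \<or> (b = B4 \<and> c4) \<or> (b = b7 \<and> vote7)" using V by blast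
    thus "bview b \<le> v7"
    proof (elim disjE conjE)
      assume "(i,Vote b) \<in> lS st"
      hence "bview b \<le> lv st" using I3[of b] A by blast
      thus ?thesis using v67 ev1' by linarith
    next
      assume "b = B4" c4 thus ?thesis using B4f v67 by auto
    next
      assume "b = b7" vote7 thus ?thesis using c7_facts evote7 v67 by auto
    qed
  next
    fix w assume "(i, Null w) \<in> lS st'"
    hence "(i,Null w) \<in> lS st \<or> (w = v1 \<and> c5) \<or> (w = v7 \<and> c8)" using N by blast
    thus "w \<le> v7" using I4 v67 ev1' by force
  next
    fix b :: "('t,'h) block" assume bg: "b \<noteq> gen"
    have Vb: "(i,Vote b) \<in> lS st' \<longleftrightarrow> (i,Vote b) \<in> lS st \<or> (b = B4 \<and> c4) \<or> (b = b7 \<and> vote7)"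
      using V[OF bg] .
    have I3b: "(i,Vote b) \<in> lS st \<Longrightarrow> bview b \<le> lv st" using I3 bg by blast
    have I5b: "(i,Vote b) \<in> lS st \<and> bview b = lv st \<longleftrightarrow> lnot st = Some b" using I5 bg by blast
    show "((i, Vote b) \<in> lS st' \<and> bview b = v7) = (not7 = Some b)"
    proof (cases c6)
      case True
      thus ?thesis using Vb I3b B4f b7f v7f nn ev1' by auto
    next
      case False
      thus ?thesis using Vb I3b I5b B4f b7f v7f nn ev1' by auto
    qed
  next
    show "((i, Null v7) \<in> lS st') = null8"
    proof -
      have "(i, Null v7) \<in> lS st' \<longleftrightarrow> (i,Null v7) \<in> lS st \<or> (v7 = v1 \<and> c5) \<or> (v7 = v7 \<and> c8)"
        using N by blast
      moreover have "(i,Null v7) \<in> lS st \<longleftrightarrow> (v7 = lv st \<and> lnull st)"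
        using I4[of v7] I6 v7f ev1' by (cases "v7 = lv st") auto
      ultimately show ?thesis using v7f nl c5f c8f ev1' by auto
    qed
  next
    fix b b'
    assume A: "(i, Vote b) \<in> lS st'" "(i, Vote b') \<in> lS st'" "b \<noteq> gen" "b' \<noteq> gen" "bview b = bview b'"
    have D1: "(i,Vote b) \<in> lS st \<or> (b = B4 \<and> c4) \<or> (b = b7 \<and> vote7)" using V A by blast
    have D2: "(i,Vote b') \<in> lS st \<or> (b' = B4 \<and> c4) \<or> (b' = b7 \<and> vote7)" using V A by blast
    have old: "\<And>c. (i,Vote c) \<in> lS st \<Longrightarrow> c \<noteq> gen \<Longrightarrow> bview c \<le> v1 \<and> (bview c = v1 \<longrightarrow> lnot st = Some c)"
      using I3 I5 ev1' by blast
    have oB4: "\<And>c. (i,Vote c) \<in> lS st \<Longrightarrow> c \<noteq> gen \<Longrightarrow> c4 \<Longrightarrow> bview c \<noteq> bview B4"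
      using old B4f by fastforce
    have ob7: "bview c \<noteq> bview b7" if "(i,Vote c) \<in> lS st" "c \<noteq> gen" vote7 for c
    proof -
      have "bview c \<le> v1 \<and> (bview c = v1 \<longrightarrow> lnot st = Some c)" using old that by blast
      thus ?thesis using b7f that by (cases c6) auto
    qed
    have B4b7: "c4 \<Longrightarrow> vote7 \<Longrightarrow> bview B4 \<noteq> bview b7" using B4f b7f by auto
    show "b = b'"
      using D1 D2 A I7 oB4 ob7 B4b7 by metis
  qed
qed


lemma b7_facts: "1 \<le> lv st \<Longrightarrow> vote7 \<Longrightarrow> bview b7 = (if c6 then v1 + 1 else v1) \<and> b7 \<noteq> gen \<and> c7 \<and>
      (\<not> c6 \<longrightarrow> \<not> c4 \<and> lnot st = None \<and> \<not> lnull st \<and> \<not> c5)"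
    using c7_facts evote7 ev6 enot6 enot4 enull6 enull5 ev1 by (auto split: if_splits)

lemma valid_step:
  assumes va: "\<forall>a \<in> lS st. valid_atom n a" and lv1: "1 \<le> lv st" and iN: "i < n"
  shows "\<forall>a \<in> lS st'. valid_atom n a"
proof -
  have v1: "\<forall>a \<in> S1. valid_atom n a" using va S1_eq by auto
  have v3: "\<forall>a \<in> O3. valid_atom n a"
    using eO3 eB3 ev1 lv1 iN unfolding valid_atom_def valid_block_def bview_def bh_def gen_def
    by auto
  have v4: "\<forall>a \<in> O4. valid_atom n a"
  proof
    fix a assume "a \<in> O4"
    hence "c4" "a = (i, Vote B4)" using eO4 by (auto split: if_splits)
    thus "valid_atom n a" using c4_facts[OF \<open>c4\<close>] iN ev1 lv1 unfolding valid_atom_def valid_block_def by auto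
  qed
  have v5: "\<forall>a \<in> O5. valid_atom n a" using eO5 iN unfolding valid_atom_def by auto
  have v8: "\<forall>a \<in> O8. valid_atom n a" using eO8 iN unfolding valid_atom_def by auto
  have vS4: "\<forall>a \<in> S4. valid_atom n a" using v1 v3 v4 v5 eS4 eS3 eS2 by auto
  have v7: "\<forall>a \<in> O7. valid_atom n a"
  proof
    fix a assume a: "a \<in> O7"
    hence vt: vote7 and aa: "a = (i, Vote b7)" using eO7 by (auto split: if_splits)
    have "b7 \<in> blocks S4" using eb7 evote7 vt by auto
    hence "valid_block b7" using blocks_valid[OF vS4] by auto
    thus "valid_atom n a" using aa iN unfolding valid_atom_def by auto
  qed
  show ?thesis using v1 v3 v4 v5 v7 v8 S6_eq st'_simps by auto
qed

lemma out_step: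
  assumes va: "\<forall>a \<in> lS st. valid_atom n a"
  shows "Out \<subseteq> lS st'"
proof -
  have v1: "\<forall>a \<in> S1. valid_atom n a" using va S1_eq by auto
  have "O12 \<subseteq> S1"
  proof
    fix a assume "a \<in> O12"
    hence "a \<in> new_msgs n f S0 S1" using eO12 by simp
    thus "a \<in> S1" unfolding new_msgs_def
    proof (elim UnE CollectE exE conjE)
      fix j v assume a: "a = (j, Null v)" "hasNull f S1 v" "j \<in> lexmin (2 * f + 1) (nullers S1 v)"
      have "lexmin (2 * f + 1) (nullers S1 v) \<subseteq> nullers S1 v"
        using lexmin_sub[of "nullers S1 v"] a(2) nullers_fin[OF v1] unfolding hasNull_def
        by (meson finite_lessThan finite_subset)
      thus ?thesis using a unfolding nullers_def by auto
    next
      fix j b assume a: "a = (j, Vote b)" "hasM f S1 b" "j \<in> lexmin (2 * f + 1) (voters S1 b)"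
      have "lexmin (2 * f + 1) (voters S1 b) \<subseteq> voters S1 b"
        using lexmin_sub[of "voters S1 b"] a(2) voters_fin[OF v1] unfolding hasM_def
        by (meson finite_lessThan finite_subset)
      thus ?thesis using a unfolding voters_def by auto
    next
      fix j b assume a: "a = (j, Vote b)" "hasL n f S1 b" "j \<in> lexmin (n - f) (voters S1 b)"
      have "lexmin (n - f) (voters S1 b) \<subseteq> voters S1 b"
        using lexmin_sub[of "voters S1 b"] a(2) voters_fin[OF v1] unfolding hasL_def
        by (meson finite_lessThan finite_subset)
      thus ?thesis using a unfolding voters_def by auto
    qed
  qed
  thus ?thesis using eOut S6_eq st'_simps by auto
qed

lemma newvote_step:
  assumes inv: "Inv i st" and sd: "SelfD n i D st"
    and v: "(i, Vote b) \<in> lS st'" "(i, Vote b) \<notin> lS st" "b \<noteq> gen"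
  shows "lv st \<le> bview b \<and> (bview b = lv st \<longrightarrow> lnot st = None \<and> \<not> lnull st)"
proof -
  have lv1: "1 \<le> lv st" using inv unfolding Inv_def by auto
  have "(b = B4 \<and> c4) \<or> (b = b7 \<and> vote7)" using votes_new[OF sd v(3)] v by auto
  thus ?thesis
  proof
    assume "b = B4 \<and> c4" thus ?thesis using c4_facts ev1 by auto
  next
    assume "b = b7 \<and> vote7" thus ?thesis using b7_facts[OF lv1] ev1 by (cases c6) auto
  qed
qed

lemma votes_S1: "voters S2 b = voters S1 b" using eS2 eO3 unfolding voters_def by auto

lemma votestep:
  assumes v: "(i, Vote b) \<in> lS st'" and lv1: "1 \<le> lv st"
  shows "(i,Vote b) \<in> S1 \<or>
    (\<exists>b''. bh b = Some (H b'') \<and> (\<exists>Q \<subseteq> voters S1 b''. card Q = 2*f+1) \<and>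
          (\<forall>u. bview b'' < u \<and> u < bview b \<longrightarrow> hasNull f (lS st') u)) \<or>
    (\<exists>Q \<subseteq> voters S1 b. card Q = 2*f+1)"
proof -
  have "(i,Vote b) \<in> S1 \<or> (b = B4 \<and> c4) \<or> (b = b7 \<and> vote7)" using selfs[OF v] by auto
  thus ?thesis
  proof (elim disjE conjE)
    assume "(i,Vote b) \<in> S1" thus ?thesis by blast
  next
    assume "b = B4" c4
    hence vp: "valid_proposal f H S2 v1 b" and bv: "bview b = v1" using c4_facts by auto
    then obtain b'' where b'': "bh b = Some (H b'')" "hasM f S2 b''"
       "\<forall>w. bview b'' < w \<and> w < v1 \<longrightarrow> hasNull f S2 w" unfolding valid_proposal_def by blast
    have "S2 \<subseteq> lS st'" using S6_eq st'_simps eS2 by auto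
    hence "\<forall>u. bview b'' < u \<and> u < bview b \<longrightarrow> hasNull f (lS st') u"
      using b''(3) bv hasNull_mono by blast
    moreover have "\<exists>Q \<subseteq> voters S1 b''. card Q = 2*f+1" using b''(2) votes_S1 unfolding hasM_def by auto
    ultimately show ?thesis using b''(1) by blast
  next
    assume bb: "b = b7" and vt: vote7
    have bf: "bview b7 = (if c6 then v1 + 1 else v1) \<and> b7 \<noteq> gen \<and> c7 \<and>
      (\<not> c6 \<longrightarrow> \<not> c4 \<and> lnot st = None \<and> \<not> lnull st \<and> \<not> c5)" using b7_facts[OF lv1 vt] .
    have ne: "c4 \<Longrightarrow> B4 \<noteq> b7" using c4_facts bf by (cases c6) auto
    have "voters S4 b7 \<subseteq> voters S1 b7"
    proof
      fix j assume "j \<in> voters S4 b7"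
      hence "(j, Vote b7) \<in> S4" unfolding voters_def by simp
      hence "(j, Vote b7) \<in> S1 \<or> (j, Vote b7) \<in> O3 \<or> (j, Vote b7) \<in> O4 \<or> (j, Vote b7) \<in> O5"
        using eS4 eS3 eS2 by blast
      moreover have "(j, Vote b7) \<notin> O3" using eO3 by simp
      moreover have "(j, Vote b7) \<notin> O5" using eO5 by simp
      moreover have "(j, Vote b7) \<notin> O4" using eO4 ne by (cases c4) auto
      ultimately show "j \<in> voters S1 b7" unfolding voters_def by simp
    qed
    moreover have "hasM f S4 b7" using eb7 bf by auto
    ultimately show ?thesis using bb unfolding hasM_def by (meson order_trans)
  qed
qed

lemma nullstep:
  assumes inv: "Inv i st" and sd: "SelfD n i D st" and va: "\<forall>a \<in> lS st. valid_atom n a"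
    and nw: "(i, Null w) \<in> lS st'" "(i, Null w) \<notin> lS st"
  shows "(\<forall>b. b \<noteq> gen \<and> bview b = w \<longrightarrow> (i,Vote b) \<notin> lS st') \<or>
    (\<exists>b M. b \<noteq> gen \<and> bview b = w \<and> (i,Vote b) \<in> lS st' \<and> 2*f+1 \<le> card M \<and> M \<subseteq> {..<n} \<and> i \<notin> M \<and>
       (\<forall>j\<in>M. (j, Null w) \<in> S1 \<or> (\<exists>b'. b' \<noteq> b \<and> bview b' = w \<and> (j, Vote b') \<in> S1)))"
proof -
  have I1: "1 \<le> lv st" and I2: "lnot st \<noteq> Some gen"
    and I5: "\<And>b. b \<noteq> gen \<Longrightarrow> ((i,Vote b) \<in> lS st \<and> bview b = lv st \<longleftrightarrow> lnot st = Some b)"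
    using inv unfolding Inv_def by blast+
  have c5f: "c5 \<Longrightarrow> \<not> lnull st \<and> \<not> c4 \<and> lnot st = None" using ec5 enot4 by (auto split: if_splits)
  have c8f: "c8 \<Longrightarrow> \<not> c5 \<and> \<not> c6 \<and> \<not> c7 \<and> \<not> lnull st \<and> not7 = not4 \<and> not4 \<noteq> None \<and> v7 = v1"
    using ec8 enull7 enot7 enot6 enull6 enull5 ec5 ev7 ev6
    by (auto split: if_splits)
  have "(w = v1 \<and> c5) \<or> (w = v7 \<and> c8)" using nulls_new[OF sd] nw by auto
  thus ?thesis
  proof
    assume A: "w = v1 \<and> c5"
    have "(i,Vote b) \<notin> lS st'" if bb: "b \<noteq> gen" "bview b = w" for b
    proof
      assume "(i,Vote b) \<in> lS st'"
      hence "(i,Vote b) \<in> lS st \<or> (b = B4 \<and> c4) \<or> (b = b7 \<and> vote7)" using votes_new[OF sd bb(1)] by blast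
      thus False
      proof (elim disjE conjE)
        assume "(i,Vote b) \<in> lS st" thus False using I5[OF bb(1)] A c5f bb ev1 by auto
      next
        assume c4 thus False using A c5f by auto
      next
        assume "b = b7" vote7 thus False using b7_facts[OF I1] A bb by (cases c6) auto
      qed
    qed
    thus ?thesis by blast
  next
    assume A: "w = v7 \<and> c8"
    note C = c8f[OF conjunct2[OF A]]
    obtain b where nb: "not4 = Some b" using C by auto
    have bfacts: "b \<noteq> gen \<and> bview b = v1 \<and> (i, Vote b) \<in> lS st'"
    proof (cases c4)
      case True thus ?thesis using nb enot4 c4_facts ins by auto
    next
      case False
      hence "lnot st = Some b" using nb enot4 by auto
      thus ?thesis using I2 I5[of b] ev1 mono by auto
    qed
    define M where "M = {j. (j, Null v7) \<in> S5 \<or> (\<exists>b. (j, Vote b) \<in> S5 \<and> bview b = v7 \<and> Some b \<noteq> not7)}"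
    have cM: "2*f+1 \<le> card M" using ec8 A M_def by auto
    have S5e: "S5 = S1 \<union> O3 \<union> O4 \<union> O5 \<union> O7" using eS5 eS4 eS3 eS2 by auto
    have O7e: "O7 = {}" using eO7 evote7 C by auto
    have O5e: "O5 = {}" using eO5 C by auto
    have vS1: "\<forall>a \<in> S1. valid_atom n a" using va S1_eq by auto
    have iM: "i \<notin> M"
    proof
      assume "i \<in> M"
      hence "(i, Null v7) \<in> S5 \<or> (\<exists>b. (i, Vote b) \<in> S5 \<and> bview b = v7 \<and> Some b \<noteq> not7)" using M_def by auto
      thus False
      proof
        assume "(i, Null v7) \<in> S5"
        hence "(i, Null v7) \<in> S1" using S5e O7e O5e eO3 eO4 by (auto split: if_splits)
        hence "(i, Null v7) \<in> lS st" using sd S1_eq unfolding SelfD_def by auto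
        thus False using nw A by auto
      next
        assume "\<exists>b. (i, Vote b) \<in> S5 \<and> bview b = v7 \<and> Some b \<noteq> not7"
        then obtain b' where b': "(i, Vote b') \<in> S5" "bview b' = v1" "Some b' \<noteq> not4" using C by auto
        have "(i, Vote b') \<in> S1 \<or> (b' = B4 \<and> c4)" using b' S5e O7e O5e eO3 eO4 by (auto split: if_splits)
        thus False
        proof
          assume "(i, Vote b') \<in> S1"
          moreover have "b' \<noteq> gen" using b' I1 ev1 by auto
          ultimately have "(i, Vote b') \<in> lS st" using sd S1_eq unfolding SelfD_def by auto
          hence "lnot st = Some b'" using I5[of b'] b' ev1 \<open>b' \<noteq> gen\<close> by auto
          thus False using b' enot4 c4_facts by (auto split: if_splits)
        next
          assume "b' = B4 \<and> c4" thus False using b' enot4 by auto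
        qed
      qed
    qed
    have Mprop: "\<forall>j\<in>M. (j, Null w) \<in> S1 \<or> (\<exists>b'. b' \<noteq> b \<and> bview b' = w \<and> (j, Vote b') \<in> S1)"
    proof
      fix j assume jM: "j \<in> M"
      hence ji: "j \<noteq> i" using iM by auto
      have S5j: "\<And>m. (j, m) \<in> S5 \<Longrightarrow> (j,m) \<in> S1" using ji S5e eO3 eO4 O5e O7e by (auto split: if_splits)
      show "(j, Null w) \<in> S1 \<or> (\<exists>b'. b' \<noteq> b \<and> bview b' = w \<and> (j, Vote b') \<in> S1)"
        using jM S5j A C nb unfolding M_def by auto
    qed
    have "M \<subseteq> {..<n}"
    proof
      fix j assume "j \<in> M"
      with Mprop obtain m where "(j, m) \<in> S1" by blast
      thus "j \<in> {..<n}" using vS1 unfolding valid_atom_def by auto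
    qed
    thus ?thesis using bfacts cM iM Mprop A C by blast
  qed
qed

lemma log_step:
  assumes p: "\<forall>b \<in> lpend st. b \<noteq> gen \<and> hasL n f (lS st) b" and g: "hasL n f (lS st) gen"
  shows "(\<forall>b \<in> lpend st'. b \<noteq> gen \<and> hasL n f (lS st') b) \<and>
    (\<forall>b \<in> set fo. b \<noteq> gen \<and> hasL n f (lS st') b \<and> (\<exists>bs. fchain H (lS st') b bs)) \<and>
    llog st' = fold (\<lambda>b L. fin_update (chain_log H (lS st') b) L) fo (llog st)"
proof -
  have m: "lS st \<subseteq> S6" using mono st'_simps by auto
  have P: "b \<noteq> gen \<and> hasL n f S6 b" if "b \<in> pend9" for b
  proof -
    have "b \<in> lpend st \<or> (hasL n f S6 b \<and> \<not> hasL n f S0 b)" using that epend9 by blast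
    thus ?thesis
    proof
      assume "b \<in> lpend st" thus ?thesis using p hasL_mono[OF m] by blast
    next
      assume "hasL n f S6 b \<and> \<not> hasL n f S0 b" thus ?thesis using g eS0 by blast
    qed
  qed
  have r: "ready \<subseteq> pend9" "\<And>b. b \<in> ready \<Longrightarrow> \<exists>bs. fchain H S6 b bs" using eready by auto
  show ?thesis unfolding st'_simps using P r efo2 by auto
qed

end




lemma slot_mono: "slot n f \<Delta> H i t D X st st' Out \<Longrightarrow> lS st \<subseteq> lS st'"
  by (erule slot_ctx) (erule slotctx.mono(1))

lemma slot_mono1: "slot n f \<Delta> H i t D X st st' Out \<Longrightarrow> lS st \<union> {a\<in>D. valid_atom n a} \<subseteq> lS st'"
  apply (erule slot_ctx)
  apply (frule slotctx.mono(2))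
  apply (drule slotctx.S1_eq)
  apply simp
  done

lemma slot_lv_mono: "slot n f \<Delta> H i t D X st st' Out \<Longrightarrow> lv st \<le> lv st'"
  by (erule slot_ctx) (erule slotctx.lv_mono)

lemma slot_others: "slot n f \<Delta> H i t D X st st' Out \<Longrightarrow> (j,m) \<in> lS st' \<Longrightarrow> j \<noteq> i \<Longrightarrow>
    (j,m) \<in> lS st \<union> {a\<in>D. valid_atom n a}"
  apply (erule slot_ctx)
  apply (frule slotctx.others, assumption+)
  apply (drule slotctx.S1_eq)
  apply simp
  done

lemma slot_valid: "slot n f \<Delta> H i t D X st st' Out \<Longrightarrow> \<forall>a \<in> lS st. valid_atom n a \<Longrightarrow> 1 \<le> lv st \<Longrightarrow> i < n \<Longrightarrow>
    \<forall>a \<in> lS st'. valid_atom n a"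
  apply (erule slot_ctx)
  apply (erule slotctx.valid_step, assumption+)
  done

lemma slot_out: "slot n f \<Delta> H i t D X st st' Out \<Longrightarrow> \<forall>a \<in> lS st. valid_atom n a \<Longrightarrow> Out \<subseteq> lS st'"
  apply (erule slot_ctx)
  apply (erule slotctx.out_step, assumption+)
  done

lemma slot_inv: "slot n f \<Delta> H i t D X st st' Out \<Longrightarrow> Inv i st \<Longrightarrow> SelfD n i D st \<Longrightarrow> Inv i st'"
  apply (erule slot_ctx)
  apply (erule slotctx.inv_step, assumption+)
  done

lemma slot_newvote: "slot n f \<Delta> H i t D X st st' Out \<Longrightarrow> Inv i st \<Longrightarrow> SelfD n i D st \<Longrightarrow>
   (i, Vote b) \<in> lS st' \<Longrightarrow> (i, Vote b) \<notin> lS st \<Longrightarrow> b \<noteq> gen \<Longrightarrow>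
   lv st \<le> bview b \<and> (bview b = lv st \<longrightarrow> lnot st = None \<and> \<not> lnull st)"
  apply (erule slot_ctx)
  apply (erule slotctx.newvote_step, assumption+)
  done

lemma slot_votestep: "slot n f \<Delta> H i t D X st st' Out \<Longrightarrow> (i, Vote b) \<in> lS st' \<Longrightarrow> 1 \<le> lv st \<Longrightarrow>
   (i,Vote b) \<in> lS st \<union> {a\<in>D. valid_atom n a} \<or>
    (\<exists>b''. bh b = Some (H b'') \<and> (\<exists>Q \<subseteq> voters (lS st \<union> {a\<in>D. valid_atom n a}) b''. card Q = 2*f+1) \<and>
          (\<forall>u. bview b'' < u \<and> u < bview b \<longrightarrow> hasNull f (lS st') u)) \<or>
    (\<exists>Q \<subseteq> voters (lS st \<union> {a\<in>D. valid_atom n a}) b. card Q = 2*f+1)"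
  apply (erule slot_ctx)
  apply (frule slotctx.votestep, assumption+)
  apply (drule slotctx.S1_eq)
  apply simp
  done

lemma slot_nullstep: "slot n f \<Delta> H i t D X st st' Out \<Longrightarrow> Inv i st \<Longrightarrow> SelfD n i D st \<Longrightarrow>
   \<forall>a \<in> lS st. valid_atom n a \<Longrightarrow> (i, Null w) \<in> lS st' \<Longrightarrow> (i, Null w) \<notin> lS st \<Longrightarrow>
   (\<forall>b. b \<noteq> gen \<and> bview b = w \<longrightarrow> (i,Vote b) \<notin> lS st') \<or>
    (\<exists>b M. b \<noteq> gen \<and> bview b = w \<and> (i,Vote b) \<in> lS st' \<and> 2*f+1 \<le> card M \<and> M \<subseteq> {..<n} \<and> i \<notin> M \<and>
       (\<forall>j\<in>M. (j, Null w) \<in> lS st \<union> {a\<in>D. valid_atom n a} \<or>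
          (\<exists>b'. b' \<noteq> b \<and> bview b' = w \<and> (j, Vote b') \<in> lS st \<union> {a\<in>D. valid_atom n a})))"
  apply (erule slot_ctx)
  apply (frule slotctx.nullstep, assumption+)
  apply (drule slotctx.S1_eq)
  apply simp
  done

lemma slot_log: "slot n f \<Delta> H i t D X st st' Out \<Longrightarrow>
   \<forall>b \<in> lpend st. b \<noteq> gen \<and> hasL n f (lS st) b \<Longrightarrow> hasL n f (lS st) gen \<Longrightarrow>
   (\<forall>b \<in> lpend st'. b \<noteq> gen \<and> hasL n f (lS st') b) \<and>
    (\<exists>fo. (\<forall>b \<in> set fo. b \<noteq> gen \<and> hasL n f (lS st') b \<and> (\<exists>bs. fchain H (lS st') b bs)) \<and>
    llog st' = fold (\<lambda>b L. fin_update (chain_log H (lS st') b) L) fo (llog st))"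
  apply (erule slot_ctx)
  apply (drule slotctx.log_step, assumption+)
  apply blast
  done




locale mexec =
  fixes n f \<Delta> GST and H :: "('t::linorder,'h::linorder) block \<Rightarrow> 'h" and Byz D X Out st
  assumes ex: "minimmit_exec n f \<Delta> GST H Byz D X Out st"
begin

lemma nf: "5*f+1 \<le> n" and byz: "Byz \<subseteq> {..<n}" and cb: "card Byz \<le> f" and injH: "inj H"
  using ex unfolding minimmit_exec_def by auto

lemma finByz: "finite Byz" using byz finite_subset by blast

lemma init: "i < n \<Longrightarrow> i \<notin> Byz \<Longrightarrow> st i 0 = init_state n f"
  using ex unfolding minimmit_exec_def by auto

lemma stepS: "i < n \<Longrightarrow> i \<notin> Byz \<Longrightarrow> slot n f \<Delta> H i t (D i t) (X i t) (st i t) (st i (Suc t)) (Out i t)"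
  using ex unfolding minimmit_exec_def by auto

lemma sig: "j < n \<Longrightarrow> j \<notin> Byz \<Longrightarrow> a \<in> D j t \<Longrightarrow> valid_atom n a \<Longrightarrow> (s,m) \<in> sigs n a \<Longrightarrow> s < n \<Longrightarrow> s \<notin> Byz \<Longrightarrow>
   m = Vote gen \<or> (\<exists>t0 < t. (s, m) \<in> Out s t0)"
  using ex unfolding minimmit_exec_def by blast

lemma sig1: "j < n \<Longrightarrow> j \<notin> Byz \<Longrightarrow> (s,m) \<in> D j t \<Longrightarrow> valid_atom n (s,m) \<Longrightarrow> s < n \<Longrightarrow> s \<notin> Byz \<Longrightarrow>
   m = Vote gen \<or> (\<exists>t0 < t. (s, m) \<in> Out s t0)"
  using sig[of j "(s,m)" t s m] unfolding sigs_def by auto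

lemma init_lS: "lS (init_state n f) = {(j, Vote gen) | j. j < n - f}"
  by (simp add: init_state_def)

lemma monoS: "i < n \<Longrightarrow> i \<notin> Byz \<Longrightarrow> t \<le> T \<Longrightarrow> lS (st i t) \<subseteq> lS (st i T)"
proof -
  assume i: "i < n" "i \<notin> Byz" and le: "t \<le> T"
  have "\<And>t. lS (st i t) \<subseteq> lS (st i (Suc t))" using slot_mono[OF stepS[OF i]] .
  thus ?thesis using lift_Suc_mono_le[of "\<lambda>t. lS (st i t)", OF _ le] by blast
qed

lemma lv1: "i < n \<Longrightarrow> i \<notin> Byz \<Longrightarrow> 1 \<le> lv (st i T)"
proof (induction T)
  case 0 thus ?case using init by (simp add: init_state_def)
next
  case (Suc T) thus ?case using slot_lv_mono[OF stepS[OF Suc.prems]] le_trans by blast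
qed

lemma validS: "i < n \<Longrightarrow> i \<notin> Byz \<Longrightarrow> \<forall>a \<in> lS (st i T). valid_atom n a"
proof (induction T)
  case 0 thus ?case using init[OF 0]
    by (auto simp: init_state_def valid_atom_def valid_block_def)
next
  case (Suc T) thus ?case using slot_valid[OF stepS[OF Suc.prems]] lv1 by blast
qed

lemma outS: "i < n \<Longrightarrow> i \<notin> Byz \<Longrightarrow> Out i t \<subseteq> lS (st i (Suc t))"
  using slot_out[OF stepS] validS by blast

lemma K1': 
  assumes i: "i < n" "i \<notin> Byz" and j: "j < n" "j \<notin> Byz" and d: "(j,m) \<in> D i T" "valid_atom n (j,m)"
  shows "m = Vote gen \<or> (j,m) \<in> lS (st j T)"
proof -
  from sig1[OF i d j] show ?thesis
  proof
    assume "\<exists>t0<T. (j, m) \<in> Out j t0"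
    then obtain t0 where "t0 < T" "(j,m) \<in> Out j t0" by blast
    hence "(j,m) \<in> lS (st j (Suc t0))" using outS[OF j] by blast
    moreover have "lS (st j (Suc t0)) \<subseteq> lS (st j T)" using monoS[OF j] \<open>t0 < T\<close> by simp
    ultimately show ?thesis by blast
  qed simp
qed

lemma K: "i < n \<Longrightarrow> i \<notin> Byz \<Longrightarrow> j < n \<Longrightarrow> j \<notin> Byz \<Longrightarrow> (j,m) \<in> lS (st i T) \<Longrightarrow>
   m = Vote gen \<or> (j,m) \<in> lS (st j T)"
proof (induction T)
  case 0 thus ?case using init[OF 0(1,2)] init_lS by auto
next
  case (Suc T)
  show ?case
  proof (cases "j = i")
    case True thus ?thesis using Suc by simp
  next
    case False
    hence "(j,m) \<in> lS (st i T) \<union> {a\<in>D i T. valid_atom n a}"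
      using slot_others[OF stepS[OF Suc.prems(1,2)] Suc.prems(5)] by blast
    hence "m = Vote gen \<or> (j,m) \<in> lS (st j T)" using Suc.IH[OF Suc.prems(1-4)] K1'[OF Suc.prems(1-4)] by blast
    thus ?thesis using slot_mono[OF stepS[OF Suc.prems(3,4)]] by blast
  qed
qed

lemma K1: "i < n \<Longrightarrow> i \<notin> Byz \<Longrightarrow> j < n \<Longrightarrow> j \<notin> Byz \<Longrightarrow> (j,m) \<in> lS (st i T) \<union> {a\<in>D i T. valid_atom n a} \<Longrightarrow>
   m = Vote gen \<or> (j,m) \<in> lS (st j T)"
  using K K1' by blast

lemma selfD: "i < n \<Longrightarrow> i \<notin> Byz \<Longrightarrow> SelfD n i (D i T) (st i T)"
  unfolding SelfD_def using K1'[of i i] by blast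

lemma inv: "i < n \<Longrightarrow> i \<notin> Byz \<Longrightarrow> Inv i (st i T)"
proof (induction T)
  case 0 thus ?case using init[OF 0] unfolding Inv_def init_state_def by auto
next
  case (Suc T) thus ?case using slot_inv[OF stepS[OF Suc.prems] _ selfD[OF Suc.prems]] by blast
qed

lemma vote_unique:
  assumes i: "i < n" "i \<notin> Byz" and v: "(i,Vote b) \<in> lS (st i T1)" "(i,Vote b') \<in> lS (st i T2)"
    and g: "b \<noteq> gen" "b' \<noteq> gen" and e: "bview b = bview b'"
  shows "b = b'"
proof -
  have "(i,Vote b) \<in> lS (st i (max T1 T2))" "(i,Vote b') \<in> lS (st i (max T1 T2))"
    using v monoS[OF i] by (meson max.cobounded1 max.cobounded2 subsetD)+
  thus ?thesis using inv[OF i, of "max T1 T2"] g e unfolding Inv_def by blast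
qed

lemma novote_forever:
  assumes i: "i < n" "i \<notin> Byz" and nl: "(i, Null w) \<in> lS (st i T)"
    and nv: "\<forall>b. b \<noteq> gen \<and> bview b = w \<longrightarrow> (i,Vote b) \<notin> lS (st i T)" and le: "T \<le> T'"
  shows "\<forall>b. b \<noteq> gen \<and> bview b = w \<longrightarrow> (i,Vote b) \<notin> lS (st i T')"
  using le
proof (induction T' rule: dec_induct)
  case base thus ?case using nv .
next
  case (step m)
  show ?case
  proof (intro allI impI notI)
    fix b assume b: "b \<noteq> gen \<and> bview b = w" and vin: "(i, Vote b) \<in> lS (st i (Suc m))"
    have vnot: "(i, Vote b) \<notin> lS (st i m)" using step.IH b by blast
    have nm: "(i, Null w) \<in> lS (st i m)" using nl monoS[OF i step.hyps(1)] by blast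
    have I: "Inv i (st i m)" using inv[OF i] .
    have "lv (st i m) \<le> bview b \<and> (bview b = lv (st i m) \<longrightarrow> lnot (st i m) = None \<and> \<not> lnull (st i m))"
      using slot_newvote[OF stepS[OF i] I selfD[OF i] vin vnot] b by blast
    moreover have "w \<le> lv (st i m)" using I nm unfolding Inv_def by blast
    moreover have "(i, Null (lv (st i m))) \<in> lS (st i m) \<longleftrightarrow> lnull (st i m)" using I unfolding Inv_def by blast
    ultimately show False using b nm by (metis le_antisym)
  qed
qed

end




lemma anc_trans: "d \<in> anc H c \<Longrightarrow> c \<in> anc H b \<Longrightarrow> d \<in> anc H b"
proof (induction rule: anc.induct)
  case self thus ?case .
next
  case (parent c' p) thus ?case using anc.parent by blast
qed

context mexec begin

definition Fin :: "('t,'h) block \<Rightarrow> bool" where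
  "Fin b \<longleftrightarrow> b \<noteq> gen \<and> (\<exists>p T. p < n \<and> p \<notin> Byz \<and> hasL n f (lS (st p T)) b)"

definition Cv :: "('t,'h) block \<Rightarrow> nat set" where
  "Cv b = {j. j < n \<and> j \<notin> Byz \<and> (\<exists>T. (j,Vote b) \<in> lS (st j T))}"

lemma correct_member: assumes "Q \<subseteq> {..<n}" "f < card Q" shows "\<exists>j\<in>Q. j \<notin> Byz"
proof (rule ccontr)
  assume "\<not> (\<exists>j\<in>Q. j \<notin> Byz)"
  hence "Q \<subseteq> Byz" by blast
  hence "card Q \<le> card Byz" using card_mono[OF finByz] by blast
  thus False using cb assms(2) by linarith
qed

lemma Fin_view: assumes "Fin b" shows "1 \<le> bview b"
proof -
  obtain p T Q where p: "p < n" "p \<notin> Byz" and Q: "Q \<subseteq> voters (lS (st p T)) b" "card Q = n - f"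
    using assms unfolding Fin_def hasL_def by blast
  have "Q \<noteq> {}" using Q(2) nf by auto
  then obtain j where "j \<in> Q" by blast
  hence "(j, Vote b) \<in> lS (st p T)" using Q(1) unfolding voters_def by blast
  hence "valid_atom n (j, Vote b)" using validS[OF p] by blast
  hence "valid_block b" unfolding valid_atom_def by simp
  thus ?thesis using valid_block_view assms unfolding Fin_def by blast
qed

lemma count:
  assumes fb: "Fin b" and M: "M \<subseteq> {..<n}" and dis: "\<forall>j\<in>M. j \<notin> Cv b"
  shows "card M \<le> 2*f"
proof -
  obtain p T Q where p: "p < n" "p \<notin> Byz" and Q: "Q \<subseteq> voters (lS (st p T)) b" "card Q = n - f"
    and bg: "b \<noteq> gen"
    using fb unfolding Fin_def hasL_def by blast
  have Qn: "Q \<subseteq> {..<n}" using Q(1) voters_fin[OF validS[OF p]] by blast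
  define G where "G = Q - Byz"
  have GC: "G \<subseteq> Cv b"
  proof
    fix j assume "j \<in> G"
    hence j: "j < n" "j \<notin> Byz" "(j, Vote b) \<in> lS (st p T)" using Qn Q(1) unfolding G_def voters_def by auto
    hence "(j, Vote b) \<in> lS (st j T)" using K[OF p j(1,2) j(3)] bg by auto
    thus "j \<in> Cv b" using j unfolding Cv_def by blast
  qed
  have finQ: "finite Q" using Qn finite_subset by blast
  have cG: "n - f - f \<le> card G"
  proof -
    have "card Q - card Byz \<le> card G" unfolding G_def by (rule diff_card_le_card_Diff[OF finByz])
    thus ?thesis using Q(2) cb by linarith
  qed
  have Gn: "G \<subseteq> {..<n}" using Qn unfolding G_def by blast
  have "M \<subseteq> {..<n} - G" using M dis GC by blast
  hence "card M \<le> card ({..<n} - G)" by (intro card_mono) auto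
  also have "\<dots> = n - card G" using card_Diff_subset[OF finite_subset[OF Gn] Gn] by simp
  finally show ?thesis using cG nf by linarith
qed

lemma noNullC:
  assumes fb: "Fin b"
  shows "\<forall>j. j < n \<and> j \<notin> Byz \<and> j \<in> Cv b \<longrightarrow> (j, Null (bview b)) \<notin> lS (st j T)"
proof (induction T)
  case 0 show ?case using init by (auto simp: init_state_def)
next
  case (Suc T)
  show ?case
  proof (intro allI impI notI)
    fix i assume ic: "i < n \<and> i \<notin> Byz \<and> i \<in> Cv b" and nin: "(i, Null (bview b)) \<in> lS (st i (Suc T))"
    have i: "i < n" "i \<notin> Byz" using ic by auto
    have bg: "b \<noteq> gen" using fb unfolding Fin_def by blast
    have w1: "1 \<le> bview b" using Fin_view[OF fb] .
    have nnot: "(i, Null (bview b)) \<notin> lS (st i T)" using Suc.IH ic by blast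
    obtain T1 where T1: "(i, Vote b) \<in> lS (st i T1)" using ic unfolding Cv_def by blast
    from slot_nullstep[OF stepS[OF i] inv[OF i] selfD[OF i] validS[OF i] nin nnot]
    show False
    proof
      assume nv: "\<forall>b'. b' \<noteq> gen \<and> bview b' = bview b \<longrightarrow> (i,Vote b') \<notin> lS (st i (Suc T))"
      have "\<forall>b'. b' \<noteq> gen \<and> bview b' = bview b \<longrightarrow> (i,Vote b') \<notin> lS (st i (max T1 (Suc T)))"
        using novote_forever[OF i nin nv] by simp
      moreover have "(i, Vote b) \<in> lS (st i (max T1 (Suc T)))" using T1 monoS[OF i] by (meson max.cobounded1 subsetD)
      ultimately show False using bg by blast
    next
      assume "\<exists>b'' M. b'' \<noteq> gen \<and> bview b'' = bview b \<and> (i,Vote b'') \<in> lS (st i (Suc T)) \<and> 2*f+1 \<le> card M \<and>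
        M \<subseteq> {..<n} \<and> i \<notin> M \<and>
       (\<forall>j\<in>M. (j, Null (bview b)) \<in> lS (st i T) \<union> {a\<in>D i T. valid_atom n a} \<or>
          (\<exists>b'. b' \<noteq> b'' \<and> bview b' = bview b \<and> (j, Vote b') \<in> lS (st i T) \<union> {a\<in>D i T. valid_atom n a}))"
      then obtain b'' M where b'': "b'' \<noteq> gen" "bview b'' = bview b" "(i,Vote b'') \<in> lS (st i (Suc T))"
        and M: "2*f+1 \<le> card M" "M \<subseteq> {..<n}"
        and Mp: "\<forall>j\<in>M. (j, Null (bview b)) \<in> lS (st i T) \<union> {a\<in>D i T. valid_atom n a} \<or>
          (\<exists>b'. b' \<noteq> b'' \<and> bview b' = bview b \<and> (j, Vote b') \<in> lS (st i T) \<union> {a\<in>D i T. valid_atom n a})"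
        by blast
      have bb: "b'' = b" using vote_unique[OF i b''(3) T1 b''(1) bg b''(2)] .
      have "\<forall>j\<in>M. j \<notin> Cv b"
      proof (intro ballI notI)
        fix j assume jM: "j \<in> M" and jC: "j \<in> Cv b"
        have j: "j < n" "j \<notin> Byz" using jC unfolding Cv_def by auto
        obtain T2 where T2: "(j, Vote b) \<in> lS (st j T2)" using jC unfolding Cv_def by blast
        from Mp jM show False
        proof (elim ballE disjE exE conjE)
          assume "(j, Null (bview b)) \<in> lS (st i T) \<union> {a\<in>D i T. valid_atom n a}"
          hence "(j, Null (bview b)) \<in> lS (st j T)" using K1[OF i j] by blast
          thus False using Suc.IH j jC by blast
        next
          fix b' assume b': "b' \<noteq> b''" "bview b' = bview b" "(j, Vote b') \<in> lS (st i T) \<union> {a\<in>D i T. valid_atom n a}"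
          have b'g: "b' \<noteq> gen" using b'(2) w1 by auto
          hence "(j, Vote b') \<in> lS (st j T)" using K1[OF i j b'(3)] by blast
          hence "b' = b" using vote_unique[OF j _ T2 b'g bg b'(2)] by blast
          thus False using b'(1) bb by blast
        qed blast
      qed
      hence "card M \<le> 2*f" using count[OF fb M(2)] by blast
      thus False using M(1) by linarith
    qed
  qed
qed

lemma noNull:
  assumes fb: "Fin b" and p: "p < n" "p \<notin> Byz"
  shows "\<not> hasNull f (lS (st p T)) (bview b)"
proof
  assume "hasNull f (lS (st p T)) (bview b)"
  then obtain Q where Q: "Q \<subseteq> nullers (lS (st p T)) (bview b)" "card Q = 2*f+1" unfolding hasNull_def by blast
  have Qn: "Q \<subseteq> {..<n}" using Q(1) nullers_fin[OF validS[OF p]] by blast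
  have "\<forall>j\<in>Q. j \<notin> Cv b"
  proof (intro ballI notI)
    fix j assume jQ: "j \<in> Q" and jC: "j \<in> Cv b"
    have j: "j < n" "j \<notin> Byz" using jC unfolding Cv_def by auto
    have "(j, Null (bview b)) \<in> lS (st p T)" using jQ Q(1) unfolding nullers_def by blast
    hence "(j, Null (bview b)) \<in> lS (st j T)" using K[OF p j] by blast
    thus False using noNullC[OF fb] j jC by blast
  qed
  hence "card Q \<le> 2*f" using count[OF fb Qn] by blast
  thus False using Q(2) by linarith
qed

lemma uniqM:
  assumes fb: "Fin b" and p: "p < n" "p \<notin> Byz" and hm: "hasM f (lS (st p T)) b'" and v: "bview b' = bview b"
  shows "b' = b"
proof (rule ccontr)
  assume ne: "b' \<noteq> b"
  obtain Q where Q: "Q \<subseteq> voters (lS (st p T)) b'" "card Q = 2*f+1" using hm unfolding hasM_def by blast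
  have Qn: "Q \<subseteq> {..<n}" using Q(1) voters_fin[OF validS[OF p]] by blast
  have bg: "b \<noteq> gen" using fb unfolding Fin_def by blast
  have b'g: "b' \<noteq> gen" using v Fin_view[OF fb] by auto
  have "\<forall>j\<in>Q. j \<notin> Cv b"
  proof (intro ballI notI)
    fix j assume jQ: "j \<in> Q" and jC: "j \<in> Cv b"
    have j: "j < n" "j \<notin> Byz" using jC unfolding Cv_def by auto
    obtain T2 where T2: "(j, Vote b) \<in> lS (st j T2)" using jC unfolding Cv_def by blast
    have "(j, Vote b') \<in> lS (st p T)" using jQ Q(1) unfolding voters_def by blast
    hence "(j, Vote b') \<in> lS (st j T)" using K[OF p j] b'g by blast
    hence "b' = b" using vote_unique[OF j _ T2 b'g bg v] by blast
    thus False using ne by blast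
  qed
  hence "card Q \<le> 2*f" using count[OF fb Qn] by blast
  thus False using Q(2) by linarith
qed

lemma good:
  assumes fb: "Fin b"
  shows "\<forall>j b'. j < n \<and> j \<notin> Byz \<and> (j, Vote b') \<in> lS (st j T) \<and> bview b < bview b' \<longrightarrow> b \<in> anc H b'"
proof (induction T)
  case 0 show ?case using init by (auto simp: init_state_def)
next
  case (Suc T)
  show ?case
  proof (intro allI impI)
    fix i b' assume A: "i < n \<and> i \<notin> Byz \<and> (i, Vote b') \<in> lS (st i (Suc T)) \<and> bview b < bview b'"
    have i: "i < n" "i \<notin> Byz" and vin: "(i, Vote b') \<in> lS (st i (Suc T))" and lt: "bview b < bview b'"
      using A by auto
    have b'g: "b' \<noteq> gen" using lt by auto
    let ?S1 = "lS (st i T) \<union> {a\<in>D i T. valid_atom n a}"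
    have vS1: "\<forall>a\<in>?S1. valid_atom n a" using validS[OF i] by blast
    have corr: "\<exists>j. j < n \<and> j \<notin> Byz \<and> (j, Vote c) \<in> lS (st j T)"
      if qq: "Q \<subseteq> voters ?S1 c" "card Q = 2*f+1" "c \<noteq> gen" for Q c
    proof -
      have Qn: "Q \<subseteq> {..<n}" using qq(1) voters_fin[OF vS1] by blast
      obtain j where jQ: "j \<in> Q" "j \<notin> Byz" using correct_member[OF Qn] qq(2) by auto
      have jn: "j < n" using jQ Qn by blast
      have "(j, Vote c) \<in> ?S1" using jQ qq(1) unfolding voters_def by blast
      hence "(j, Vote c) \<in> lS (st j T)" using K1[OF i jn jQ(2)] qq(3) by blast
      thus ?thesis using jn jQ by blast
    qed
    from slot_votestep[OF stepS[OF i] vin lv1[OF i]]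
    show "b \<in> anc H b'"
    proof (elim disjE exE conjE)
      assume "(i, Vote b') \<in> ?S1"
      hence "(i, Vote b') \<in> lS (st i T)" using K1[OF i i] b'g by blast
      thus ?thesis using Suc.IH i lt by blast
    next
      fix b'' Q assume bh: "bh b' = Some (H b'')" and Q: "Q \<subseteq> voters ?S1 b''" "card Q = 2*f+1"
        and nul: "\<forall>u. bview b'' < u \<and> u < bview b' \<longrightarrow> hasNull f (lS (st i (Suc T))) u"
      have par: "b'' \<in> anc H b'" using anc.parent[OF anc.self[where H=H and b=b'] b'g bh] .
      consider "bview b'' < bview b" | "bview b'' = bview b" | "bview b < bview b''" by linarith
      thus ?thesis
      proof cases
        case 1
        hence "hasNull f (lS (st i (Suc T))) (bview b)" using nul lt by blast
        thus ?thesis using noNull[OF fb i] by blast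
      next
        case 2
        have "?S1 \<subseteq> lS (st i (Suc T))" using slot_mono1[OF stepS[OF i]] .
        hence "hasM f (lS (st i (Suc T))) b''" using Q voters_mono unfolding hasM_def by (meson order_trans)
        hence "b'' = b" using uniqM[OF fb i _ 2] by blast
        thus ?thesis using par by simp
      next
        case 3
        hence "b'' \<noteq> gen" by auto
        then obtain j where j: "j < n" "j \<notin> Byz" "(j, Vote b'') \<in> lS (st j T)" using corr[OF Q] by blast
        hence "b \<in> anc H b''" using Suc.IH 3 by blast
        thus ?thesis using anc_trans par by blast
      qed
    next
      fix Q assume Q: "Q \<subseteq> voters ?S1 b'" "card Q = 2*f+1"
      obtain j where j: "j < n" "j \<notin> Byz" "(j, Vote b') \<in> lS (st j T)" using corr[OF Q b'g] by blast
      thus ?thesis using Suc.IH lt by blast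
    qed
  qed
qed

lemma cons_le:
  assumes f1: "Fin b1" and f2: "Fin b2" and le: "bview b1 \<le> bview b2"
  shows "b1 \<in> anc H b2"
proof -
  obtain p T Q where p: "p < n" "p \<notin> Byz" and Q: "Q \<subseteq> voters (lS (st p T)) b2" "card Q = n - f"
    using f2 unfolding Fin_def hasL_def by blast
  have Qn: "Q \<subseteq> {..<n}" using Q(1) voters_fin[OF validS[OF p]] by blast
  show ?thesis
  proof (cases "bview b1 = bview b2")
    case True
    have "2*f+1 \<le> card Q" using Q(2) nf by linarith
    then obtain Q' where "Q' \<subseteq> Q" "card Q' = 2*f+1" using obtain_subset_with_card_n by metis
    hence "hasM f (lS (st p T)) b2" using Q(1) unfolding hasM_def by (meson order_trans)
    hence "b2 = b1" using uniqM[OF f1 p] True by simp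
    thus ?thesis using anc.self by simp
  next
    case False
    hence lt: "bview b1 < bview b2" using le by simp
    have "f < card Q" using Q(2) nf by linarith
    then obtain j where jQ: "j \<in> Q" "j \<notin> Byz" using correct_member[OF Qn] by blast
    have jn: "j < n" using jQ Qn by blast
    have "(j, Vote b2) \<in> lS (st p T)" using jQ Q(1) unfolding voters_def by blast
    hence "(j, Vote b2) \<in> lS (st j T)" using K[OF p jn jQ(2)] f2 unfolding Fin_def by blast
    thus ?thesis using good[OF f1] jn jQ lt by blast
  qed
qed

lemma consistent: "Fin b1 \<Longrightarrow> Fin b2 \<Longrightarrow> b1 \<in> anc H b2 \<or> b2 \<in> anc H b1"
  using cons_le nat_le_linear by blast

end




definition chainof :: "(('t,'h) block \<Rightarrow> 'h) \<Rightarrow> ('t,'h) block \<Rightarrow> ('t,'h) block list \<Rightarrow> bool" where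
  "chainof H b bs \<longleftrightarrow> bs \<noteq> [] \<and> hd bs = gen \<and> last bs = b \<and>
     (\<forall>k. Suc k < length bs \<longrightarrow> bh (bs ! Suc k) = Some (H (bs ! k)))"

lemma fchain_chainof: "fchain H S b bs \<Longrightarrow> chainof H b bs"
  unfolding fchain_def chainof_def by blast

lemma chain_len1: "chainof H b bs \<Longrightarrow> length bs = 1 \<Longrightarrow> b = gen"
  unfolding chainof_def by (cases bs) auto

lemma chain_len2:
  assumes c: "chainof H b bs" and l: "2 \<le> length bs"
  shows "chainof H (last (butlast bs)) (butlast bs) \<and> bh b = Some (H (last (butlast bs))) \<and> b \<noteq> gen"
proof -
  have ne: "butlast bs \<noteq> []" using l by (cases bs) auto
  have hd: "hd (butlast bs) = gen" using c l unfolding chainof_def by (cases bs) auto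
  have lb: "last (butlast bs) = bs ! (length bs - 2)"
    using ne l by (simp add: last_conv_nth nth_butlast numeral_2_eq_2)
  have e1: "length bs - 1 = Suc (length bs - 2)" using l by linarith
  have lbs: "b = bs ! Suc (length bs - 2)"
  proof -
    have "b = last bs" using c unfolding chainof_def by simp
    also have "\<dots> = bs ! (length bs - 1)" using c unfolding chainof_def by (intro last_conv_nth) blast
    finally show ?thesis using e1 by simp
  qed
  have sk: "Suc (length bs - 2) < length bs" using l by linarith
  have bhb: "bh b = Some (H (last (butlast bs)))"
    using c sk lb lbs unfolding chainof_def by simp
  have steps: "\<forall>k. Suc k < length (butlast bs) \<longrightarrow> bh (butlast bs ! Suc k) = Some (H (butlast bs ! k))"
    using c unfolding chainof_def by (simp add: nth_butlast)
  have "b \<noteq> gen" using bhb by auto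
  thus ?thesis using ne hd steps bhb unfolding chainof_def by simp
qed

lemma chain_unique:
  assumes inj: "inj H"
  shows "chainof H b bs1 \<Longrightarrow> chainof H b bs2 \<Longrightarrow> bs1 = bs2"
proof (induction bs1 arbitrary: b bs2 rule: length_induct)
  case (1 bs1)
  have ne1: "bs1 \<noteq> []" and ne2: "bs2 \<noteq> []" using "1.prems" unfolding chainof_def by auto
  show ?case
  proof (cases "length bs1 = 1")
    case True
    hence bg: "b = gen" using chain_len1 "1.prems"(1) by blast
    have "\<not> 2 \<le> length bs2" using chain_len2[OF "1.prems"(2)] bg by blast
    moreover have "length bs2 \<noteq> 0" using ne2 by simp
    ultimately have "length bs2 = 1" by linarith
    then obtain x y where "bs1 = [x]" "bs2 = [y]" using True by (metis One_nat_def length_0_conv length_Suc_conv)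
    thus ?thesis using "1.prems" unfolding chainof_def by simp
  next
    case False
    moreover have "length bs1 \<noteq> 0" using ne1 by simp
    ultimately have l1: "2 \<le> length bs1" by linarith
    note c1 = chain_len2[OF "1.prems"(1) l1]
    have l2: "2 \<le> length bs2"
    proof (rule ccontr)
      assume "\<not> 2 \<le> length bs2"
      moreover have "length bs2 \<noteq> 0" using ne2 by simp
      ultimately have "length bs2 = 1" by linarith
      thus False using chain_len1[OF "1.prems"(2)] c1 by blast
    qed
    note c2 = chain_len2[OF "1.prems"(2) l2]
    have "H (last (butlast bs1)) = H (last (butlast bs2))" using c1 c2 by simp
    hence eqp: "last (butlast bs1) = last (butlast bs2)" using inj unfolding inj_def by blast
    have "length (butlast bs1) < length bs1" using ne1 by simp
    hence "butlast bs1 = butlast bs2" using "1.IH" c1 c2 eqp by metis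
    moreover have "last bs1 = last bs2" using "1.prems" unfolding chainof_def by simp
    ultimately show ?thesis using ne1 ne2 by (metis append_butlast_last_id)
  qed
qed

lemma anc_prefix:
  assumes inj: "inj H"
  shows "b1 \<in> anc H b2 \<Longrightarrow> chainof H b2 bs2 \<Longrightarrow> \<exists>bs1. prefix bs1 bs2 \<and> chainof H b1 bs1"
proof (induction rule: anc.induct)
  case self thus ?case by blast
next
  case (parent c p)
  then obtain bsc where bsc: "prefix bsc bs2" "chainof H c bsc" by blast
  have ne: "bsc \<noteq> []" using bsc unfolding chainof_def by blast
  have l: "2 \<le> length bsc"
  proof (rule ccontr)
    assume "\<not> 2 \<le> length bsc"
    moreover have "length bsc \<noteq> 0" using ne by simp
    ultimately have "length bsc = 1" by linarith
    thus False using chain_len1[OF bsc(2)] parent.hyps(2) by blast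
  qed
  note cc = chain_len2[OF bsc(2) l]
  have "H p = H (last (butlast bsc))" using cc parent.hyps(3) by simp
  hence "p = last (butlast bsc)" using inj unfolding inj_def by blast
  moreover have "prefix (butlast bsc) bs2" using bsc(1) prefixeq_butlast prefix_order.order_trans by blast
  ultimately show ?case using cc by blast
qed


lemma dedup_snoc: "dedup (xs @ [x]) = dedup xs @ (if x \<in> set xs then [] else [x])"
  unfolding dedup_def by simp

lemma dedup_prefix_app: "prefix (dedup xs) (dedup (xs @ zs))"
proof (induction zs rule: rev_induct)
  case Nil thus ?case by simp
next
  case (snoc z zs)
  have "dedup (xs @ zs @ [z]) = dedup (xs @ zs) @ (if z \<in> set (xs @ zs) then [] else [z])"
    using dedup_snoc[of "xs @ zs" z] by simp
  thus ?case using snoc prefix_order.order_trans by (metis append_assoc prefixI)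
qed

lemma dedup_prefix: "prefix xs ys \<Longrightarrow> prefix (dedup xs) (dedup ys)"
  using dedup_prefix_app by (metis prefixE)

lemma cm_prefix: "prefix bs1 bs2 \<Longrightarrow> prefix (concat (map btr bs1)) (concat (map btr bs2))"
  by (metis concat_append map_append prefixE prefixI)

context mexec begin

lemma chain_log_eq: "fchain H S b bs \<Longrightarrow> chain_log H S b = dedup (concat (map btr bs))"
proof -
  assume fc: "fchain H S b bs"
  have "fchain H S b (SOME bs. fchain H S b bs)" using someI[of "fchain H S b", OF fc] .
  hence "(SOME bs. fchain H S b bs) = bs" using chain_unique[OF injH] fchain_chainof fc by blast
  thus ?thesis unfolding chain_log_def by simp
qed

definition GoodLog :: "'t list \<Rightarrow> bool" where
  "GoodLog L \<longleftrightarrow> L = [] \<or> (\<exists>b bs. Fin b \<and> chainof H b bs \<and> L = dedup (concat (map btr bs)))"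

lemma fold_good:
  assumes "\<forall>b \<in> set fo. \<exists>b' bs. Fin b' \<and> chainof H b' bs \<and> chain_log H S b = dedup (concat (map btr bs))"
  shows "GoodLog L \<Longrightarrow> GoodLog (fold (\<lambda>b L. fin_update (chain_log H S b) L) fo L)"
  using assms
proof (induction fo arbitrary: L)
  case Nil thus ?case by simp
next
  case (Cons b fo)
  have "GoodLog (fin_update (chain_log H S b) L)"
    using Cons.prems unfolding fin_update_def GoodLog_def by auto
  thus ?case using Cons.IH Cons.prems(2) by simp
qed

lemma hasL_gen: "i < n \<Longrightarrow> i \<notin> Byz \<Longrightarrow> hasL n f (lS (st i T)) gen"
proof -
  assume i: "i < n" "i \<notin> Byz"
  have "lS (st i 0) \<subseteq> lS (st i T)" using monoS[OF i] by simp
  hence "{..<n-f} \<subseteq> voters (lS (st i T)) gen" using init[OF i] unfolding init_state_def voters_def by auto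
  thus ?thesis unfolding hasL_def by (metis card_lessThan)
qed

lemma pend_inv: "i < n \<Longrightarrow> i \<notin> Byz \<Longrightarrow> \<forall>b \<in> lpend (st i T). b \<noteq> gen \<and> hasL n f (lS (st i T)) b"
proof (induction T)
  case 0 thus ?case using init by (simp add: init_state_def)
next
  case (Suc T) thus ?case using slot_log[OF stepS[OF Suc.prems] _ hasL_gen[OF Suc.prems]] by blast
qed

lemma log_inv: "i < n \<Longrightarrow> i \<notin> Byz \<Longrightarrow> GoodLog (llog (st i T))"
proof (induction T)
  case 0 thus ?case using init by (simp add: init_state_def GoodLog_def)
next
  case (Suc T)
  obtain fo where fo: "\<forall>b \<in> set fo. b \<noteq> gen \<and> hasL n f (lS (st i (Suc T))) b \<and> (\<exists>bs. fchain H (lS (st i (Suc T))) b bs)"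
    "llog (st i (Suc T)) = fold (\<lambda>b L. fin_update (chain_log H (lS (st i (Suc T))) b) L) fo (llog (st i T))"
    using slot_log[OF stepS[OF Suc.prems] pend_inv[OF Suc.prems] hasL_gen[OF Suc.prems]] by blast
  have "\<forall>b \<in> set fo. \<exists>b' bs. Fin b' \<and> chainof H b' bs \<and>
      chain_log H (lS (st i (Suc T))) b = dedup (concat (map btr bs))"
  proof
    fix b assume "b \<in> set fo"
    then obtain bs where "b \<noteq> gen" "hasL n f (lS (st i (Suc T))) b" "fchain H (lS (st i (Suc T))) b bs"
      using fo(1) by blast
    moreover hence "Fin b" unfolding Fin_def using Suc.prems by blast
    ultimately show "\<exists>b' bs. Fin b' \<and> chainof H b' bs \<and>
      chain_log H (lS (st i (Suc T))) b = dedup (concat (map btr bs))"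
      using chain_log_eq fchain_chainof by blast
  qed
  thus ?case using fold_good Suc fo(2) by simp
qed

lemma good_compat: "GoodLog L1 \<Longrightarrow> GoodLog L2 \<Longrightarrow> prefix L1 L2 \<or> prefix L2 L1"
proof -
  assume g1: "GoodLog L1" and g2: "GoodLog L2"
  show ?thesis
  proof (cases "L1 = [] \<or> L2 = []")
    case True thus ?thesis by auto
  next
    case False
    then obtain b1 bs1 b2 bs2 where A: "Fin b1" "chainof H b1 bs1" "L1 = dedup (concat (map btr bs1))"
      "Fin b2" "chainof H b2 bs2" "L2 = dedup (concat (map btr bs2))"
      using g1 g2 unfolding GoodLog_def by blast
    have pre: "prefix bs1 bs2 \<or> prefix bs2 bs1"
    proof (cases "b1 \<in> anc H b2")
      case True
      then obtain bs where "prefix bs bs2" "chainof H b1 bs" using anc_prefix[OF injH True A(5)] by blast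
      thus ?thesis using chain_unique[OF injH A(2)] by blast
    next
      case False
      hence "b2 \<in> anc H b1" using consistent A by blast
      then obtain bs where "prefix bs bs1" "chainof H b2 bs" using anc_prefix[OF injH _ A(2)] by blast
      thus ?thesis using chain_unique[OF injH A(5)] by blast
    qed
    thus ?thesis using A(3,6) cm_prefix dedup_prefix by blast
  qed
qed

end

theorem lemma4:
  fixes H :: "('t::linorder,'h::linorder) block \<Rightarrow> 'h"
  assumes "minimmit_exec n f \<Delta> GST H Byz D X Out st"
    and "i < n" and "i \<notin> Byz" and "j < n" and "j \<notin> Byz"
  shows "prefix (llog (st i (Suc t))) (llog (st j (Suc t'))) \<or>
         prefix (llog (st j (Suc t'))) (llog (st i (Suc t)))"
proof -
  interpret mexec n f \<Delta> GST H Byz D X Out st using assms(1) by unfold_locales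
  show ?thesis using good_compat log_inv assms(2-5) by blast
qed


end
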